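(* Let $n\ge 2$. The maps $\sigma_1,\dots,\sigma_{n-1}$ on the set $\widetilde{\mathcal T}_n=\mathcal T_n\times\mathbb Z/n\mathbb Z$ of augmented rooted labeled trees defined in the context define an action of the braid group $B_n$ on $\widetilde{\mathcal T}_n$: they are bijections satisfying $\sigma_i\sigma_j=\sigma_j\sigma_i$ for $|i-j|\ge2$ and $\sigma_i\sigma_{i+1}\sigma_i=\sigma_{i+1}\sigma_i\sigma_{i+1}$ for $1\le i\le n-2$.
   Context: $\mathcal T_n$ is the set of rooted trees with vertices labeled $1,\dots,n$; $v_i$ is the vertex labeled $i$. Maps $\sigma_i$ on $\mathcal T_n$: if $v_{i+1}$ is the root of $T$, $\sigma_iT$ is $T$ with labels $i,i+1$ interchanged. Otherwise form $T_+$ by adding a vertex $v_0$ as parent of the root, write $a\to b$ for "$a$ is the parent of $b$", and: (0) if neither of $v_i,v_{i+1}$ is the parent of the other and they have different parents, interchange labels $i,i+1$; (1) if $v_k\to v_i\to v_{i+1}$, make $v_k\to v_{i+1}\to v_i$, other relations unchanged; (2) if $v_k\to v_{i+1}\to v_i$, make $v_i,v_{i+1}$ both children of $v_k$ and interchange their sets of other children, other relations unchanged; (3) if $v_i,v_{i+1}$ share parent $v_k$, interchange their sets of children and then make $v_{i+1}$ a child of $v_i$; then delete $v_0$. Reduced weight in $T$ with root $v_r$: $\overline w(v_r)=1$; if $v_i$ is a child of the root, $\overline w(v_i)$ is the number of vertices in the subtree rooted at $v_i$ (including $v_i$); otherwise $\overline w(v_i)=0$. For $(T,\varepsilon)\in\widetilde{\mathcal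 T}_n$ with root $v_r$: $\sigma_i(T,\varepsilon)=(\sigma_iT,\varepsilon)$ if $i\ne r-1$, and $\sigma_{r-1}(T,\varepsilon)=(\sigma_{r-1}T,\varepsilon+\overline w(v_{r-1}))$ with $\overline w$ computed in $T$. *)

theory Defs
  imports Main
begin

text \<open>A rooted tree on vertices 1..n is represented by its parent function
  p :: nat => nat.  Vertex 0 plays the role of the auxiliary vertex v_0 of T_+:
  the root r satisfies p r = 0.  Outside {1..n} the function is 0 (canonical form).\<close>

definition is_tree :: "nat \<Rightarrow> (nat \<Rightarrow> nat) \<Rightarrow> bool" where
  "is_tree n p \<longleftrightarrow>
     (\<forall>v. v \<notin> {1..n} \<longrightarrow> p v = 0) \<and>
     (\<forall>v\<in>{1..n}. p v \<le> n) \<and>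
     card {v\<in>{1..n}. p v = 0} = 1 \<and>
     (\<forall>v\<in>{1..n}. \<exists>k. (p ^^ k) v = 0)"

definition trees :: "nat \<Rightarrow> (nat \<Rightarrow> nat) set" where
  "trees n = {p. is_tree n p}"

definition swp :: "nat \<Rightarrow> nat \<Rightarrow> nat" where
  "swp i x = (if x = i then Suc i else if x = Suc i then i else x)"

definition xch :: "nat \<Rightarrow> nat \<Rightarrow> (nat \<Rightarrow> nat) \<Rightarrow> nat \<Rightarrow> nat" where
  "xch a b p c = (if p c = a then b else if p c = b then a else p c)"

definition sigma :: "nat \<Rightarrow> (nat \<Rightarrow> nat) \<Rightarrow> (nat \<Rightarrow> nat)" where
  "sigma i p =
    (let a = i; b = Suc i in
     if p b = 0 then swp i \<circ> p \<circ> swp i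
     else if p a \<noteq> b \<and> p b \<noteq> a \<and> p a \<noteq> p b then swp i \<circ> p \<circ> swp i
     else if p b = a then p(a := b, b := p a)
     else if p a = b then (xch a b p)(a := p b, b := p b)
     else (xch a b p)(a := p a, b := a))"

definition subtree_size :: "nat \<Rightarrow> (nat \<Rightarrow> nat) \<Rightarrow> nat \<Rightarrow> nat" where
  "subtree_size n p v = card {c\<in>{1..n}. \<exists>k. (p ^^ k) c = v}"

definition red_weight :: "nat \<Rightarrow> (nat \<Rightarrow> nat) \<Rightarrow> nat \<Rightarrow> nat" where
  "red_weight n p v =
    (if p v = 0 then 1
     else if p (p v) = 0 then subtree_size n p v
     else 0)"

text \<open>Augmented trees: Z/nZ represented by residues {0..<n}.\<close>
definition aug_trees :: "nat \<Rightarrow> ((nat \<Rightarrow> nat) \<times> nat) set" where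
  "aug_trees n = trees n \<times> {..<n}"

definition sigma_aug :: "nat \<Rightarrow> nat \<Rightarrow> (nat \<Rightarrow> nat) \<times> nat \<Rightarrow> (nat \<Rightarrow> nat) \<times> nat" where
  "sigma_aug n i = (\<lambda>(p, e).
     if p (Suc i) = 0 then (sigma i p, (e + red_weight n p i) mod n)
     else (sigma i p, e))"

end

theory Submission
  imports Defs
begin

section \<open>Generic local operations\<close>

definition swpG :: "'a \<Rightarrow> 'a \<Rightarrow> 'a \<Rightarrow> 'a" where
  "swpG a b v = (if v = a then b else if v = b then a else v)"
definition KKG :: "'a \<Rightarrow> 'a \<Rightarrow> 'a \<Rightarrow> 'a \<Rightarrow> 'a \<Rightarrow> bool" where
  "KKG z a b u w \<longleftrightarrow> w = z \<or> (u \<noteq> b \<and> w \<noteq> a \<and> u \<noteq> w)"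
definition VaG :: "'a \<Rightarrow> 'a \<Rightarrow> 'a \<Rightarrow> 'a \<Rightarrow> 'a \<Rightarrow> 'a" where
  "VaG z a b u w = (if KKG z a b u w then swpG a b w else if w = a then b else if u = b then w else u)"
definition VbG :: "'a \<Rightarrow> 'a \<Rightarrow> 'a \<Rightarrow> 'a \<Rightarrow> 'a \<Rightarrow> 'a" where
  "VbG z a b u w = (if KKG z a b u w then swpG a b u else if w = a then u else if u = b then w else a)"
definition GenG :: "'a \<Rightarrow> 'a \<Rightarrow> 'a \<Rightarrow> 'a \<Rightarrow> 'a \<Rightarrow> 'a \<Rightarrow> 'a" where
  "GenG z a b u w v = (if \<not> KKG z a b u w \<and> w = a then v else swpG a b v)"

lemma swp_eq: "swp i = swpG i (Suc i)"
  by (rule ext) (simp add: swp_def swpG_def)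

lemma sig_a[simp]: "sigma i p i = VaG 0 i (Suc i) (p i) (p (Suc i))"
  unfolding sigma_def Let_def xch_def swp_def VaG_def KKG_def swpG_def by auto
lemma sig_b[simp]: "sigma i p (Suc i) = VbG 0 i (Suc i) (p i) (p (Suc i))"
  unfolding sigma_def Let_def xch_def swp_def VbG_def KKG_def swpG_def by auto
lemma sig_gen[simp]: "x \<noteq> i \<Longrightarrow> x \<noteq> Suc i \<Longrightarrow> sigma i p x = GenG 0 i (Suc i) (p i) (p (Suc i)) (p x)"
  unfolding sigma_def Let_def xch_def swp_def GenG_def KKG_def swpG_def by auto

lemma sig_K0: "KKG 0 i (Suc i) (p i) (p (Suc i)) \<Longrightarrow> sigma i p = swp i \<circ> p \<circ> swp i"
  unfolding sigma_def Let_def KKG_def by auto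

lemma swpG_swpG[simp]: "swpG a b (swpG a b v) = v" by (simp add: swpG_def)
lemma swpG_inj: "swpG a b x = swpG a b y \<longleftrightarrow> x = y" by (metis swpG_swpG)
lemma swpG_fix: "v \<noteq> a \<Longrightarrow> v \<noteq> b \<Longrightarrow> swpG a b v = v" by (simp add: swpG_def)
lemma GenG_fix: "v \<noteq> a \<Longrightarrow> v \<noteq> b \<Longrightarrow> GenG z a b u w v = v" by (simp add: GenG_def swpG_def)

lemma inj_on_eq: "inj_on f S \<Longrightarrow> x \<in> S \<Longrightarrow> y \<in> S \<Longrightarrow> (f x = f y) = (x = y)"
  by (meson inj_onD)

lemma enc_swpG: "inj_on f S \<Longrightarrow> a\<in>S \<Longrightarrow> b\<in>S \<Longrightarrow> v\<in>S \<Longrightarrow> f (swpG a b v) = swpG (f a) (f b) (f v)"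
  unfolding swpG_def by (auto simp: inj_on_eq)
lemma enc_KKG: "inj_on f S \<Longrightarrow> z\<in>S \<Longrightarrow> a\<in>S \<Longrightarrow> b\<in>S \<Longrightarrow> u\<in>S \<Longrightarrow> w\<in>S \<Longrightarrow>
   KKG (f z) (f a) (f b) (f u) (f w) = KKG z a b u w"
  unfolding KKG_def by (simp add: inj_on_eq)
lemma enc_VaG: "inj_on f S \<Longrightarrow> z\<in>S \<Longrightarrow> a\<in>S \<Longrightarrow> b\<in>S \<Longrightarrow> u\<in>S \<Longrightarrow> w\<in>S \<Longrightarrow>
   f (VaG z a b u w) = VaG (f z) (f a) (f b) (f u) (f w)"
  unfolding VaG_def by (simp add: enc_KKG enc_swpG inj_on_eq)
lemma enc_VbG: "inj_on f S \<Longrightarrow> z\<in>S \<Longrightarrow> a\<in>S \<Longrightarrow> b\<in>S \<Longrightarrow> u\<in>S \<Longrightarrow> w\<in>S \<Longrightarrow>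
   f (VbG z a b u w) = VbG (f z) (f a) (f b) (f u) (f w)"
  unfolding VbG_def by (simp add: enc_KKG enc_swpG inj_on_eq)
lemma enc_GenG: "inj_on f S \<Longrightarrow> z\<in>S \<Longrightarrow> a\<in>S \<Longrightarrow> b\<in>S \<Longrightarrow> u\<in>S \<Longrightarrow> w\<in>S \<Longrightarrow> v\<in>S \<Longrightarrow>
   f (GenG z a b u w v) = GenG (f z) (f a) (f b) (f u) (f w) (f v)"
  unfolding GenG_def by (auto simp add: enc_KKG enc_swpG inj_on_eq)

lemma mem_swpG: "a\<in>S \<Longrightarrow> b\<in>S \<Longrightarrow> v\<in>S \<Longrightarrow> swpG a b v \<in> S" by (simp add: swpG_def)
lemma mem_VaG: "a\<in>S \<Longrightarrow> b\<in>S \<Longrightarrow> u\<in>S \<Longrightarrow> w\<in>S \<Longrightarrow> VaG z a b u w \<in> S" by (simp add: VaG_def swpG_def)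
lemma mem_VbG: "a\<in>S \<Longrightarrow> b\<in>S \<Longrightarrow> u\<in>S \<Longrightarrow> w\<in>S \<Longrightarrow> VbG z a b u w \<in> S" by (simp add: VbG_def swpG_def)
lemma mem_GenG: "a\<in>S \<Longrightarrow> b\<in>S \<Longrightarrow> v\<in>S \<Longrightarrow> GenG z a b u w v \<in> S" by (simp add: GenG_def swpG_def)

definition anc :: "(nat \<Rightarrow> nat) \<Rightarrow> nat \<Rightarrow> nat set" where
  "anc p c = range (\<lambda>k. (p ^^ k) c)"

lemma anc_iff: "x \<in> anc p c \<longleftrightarrow> x = c \<or> x \<in> anc p (p c)"
proof
  assume "x \<in> anc p c"
  then obtain k where k: "x = (p ^^ k) c" by (auto simp: anc_def)
  show "x = c \<or> x \<in> anc p (p c)"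
  proof (cases k)
    case 0 then show ?thesis using k by simp
  next
    case (Suc m)
    then have "x = (p ^^ m) (p c)" using k by (simp only: funpow_Suc_right comp_def)
    then show ?thesis by (auto simp: anc_def)
  qed
next
  assume "x = c \<or> x \<in> anc p (p c)"
  then show "x \<in> anc p c"
  proof
    assume "x = c" then show ?thesis unfolding anc_def by (metis funpow_0 rangeI)
  next
    assume "x \<in> anc p (p c)"
    then obtain k where "x = (p ^^ k) (p c)" by (auto simp: anc_def)
    then have "x = (p ^^ Suc k) c" by (simp only: funpow_Suc_right comp_def)
    then show ?thesis unfolding anc_def by (rule image_eqI) simp
  qed
qed

lemma anc_rec: "anc p c = insert c (anc p (p c))"
  using anc_iff by blast

lemma anc_self[simp]: "c \<in> anc p c" by (subst anc_iff) simp

lemma anc_trans: "x \<in> anc p c \<Longrightarrow> anc p x \<subseteq> anc p c"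
proof
  fix y assume "x \<in> anc p c" "y \<in> anc p x"
  then obtain k m where "x = (p ^^ k) c" "y = (p ^^ m) x" by (auto simp: anc_def)
  then have "y = (p ^^ (m + k)) c" by (simp add: funpow_add)
  then show "y \<in> anc p c" by (auto simp: anc_def)
qed

lemma funpow_fix0: fixes p :: "nat \<Rightarrow> nat" shows "p 0 = 0 \<Longrightarrow> (p ^^ k) 0 = 0"
  by (induct k) simp_all

lemma anc_0: "p 0 = 0 \<Longrightarrow> anc p 0 = {0}"
  by (auto simp: anc_def funpow_fix0)

lemma anc_chain: "x \<in> anc p c \<Longrightarrow> y \<in> anc p c \<Longrightarrow> x \<in> anc p y \<or> y \<in> anc p x"
proof -
  assume "x \<in> anc p c" "y \<in> anc p c"
  then obtain k m where km: "x = (p ^^ k) c" "y = (p ^^ m) c" by (auto simp: anc_def)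
  show ?thesis
  proof (cases "k \<le> m")
    case True
    then have "y = (p ^^ (m - k)) x" using km by (metis funpow_add comp_apply le_add_diff_inverse2)
    then show ?thesis by (auto simp: anc_def)
  next
    case False
    then have "k - m + m = k" by simp
    then have "x = (p ^^ (k - m)) y" using km by (metis funpow_add comp_apply)
    then show ?thesis by (auto simp: anc_def)
  qed
qed

lemma size_anc: "subtree_size n p v = card {c\<in>{1..n}. v \<in> anc p c}"
proof -
  have "\<And>c. (\<exists>k. (p ^^ k) c = v) \<longleftrightarrow> v \<in> anc p c" by (auto simp: anc_def)
  then show ?thesis unfolding subtree_size_def by simp
qed

definition good :: "nat \<Rightarrow> (nat \<Rightarrow> nat) \<Rightarrow> bool" where
  "good n p \<longleftrightarrow> (\<forall>v. v \<notin> {1..n} \<longrightarrow> p v = 0) \<and> (\<forall>v. p v \<le> n)"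

definition rkd :: "nat \<Rightarrow> (nat \<Rightarrow> nat) \<Rightarrow> (nat \<Rightarrow> nat) \<Rightarrow> bool" where
  "rkd n p rk \<longleftrightarrow> (\<forall>v\<in>{1..n}. p v \<noteq> 0 \<longrightarrow> rk (p v) < rk v)"

lemma card1_iff: fixes p :: "nat \<Rightarrow> nat" shows "card {v\<in>{1..n}. p v = 0} = 1 \<longleftrightarrow> (\<exists>!r. r \<in> {1..n} \<and> p r = 0)"
proof -
  have "card {v\<in>{1..n}. p v = (0::nat)} = 1 \<longleftrightarrow> (\<exists>x. {v\<in>{1..n}. p v = 0} = {x})"
    by (simp add: card_1_singleton_iff)
  also have "\<dots> \<longleftrightarrow> (\<exists>!r. r \<in> {1..n} \<and> p r = 0)"
  proof
    assume "\<exists>x. {v\<in>{1..n}. p v = 0} = {x}"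
    then obtain x where x: "{v\<in>{1..n}. p v = 0} = {x}" by blast
    then have 1: "\<And>v. (v \<in> {1..n} \<and> p v = 0) \<longleftrightarrow> v = x" by (simp add: set_eq_iff)
    show "\<exists>!r. r \<in> {1..n} \<and> p r = 0"
    proof (rule ex1I[where a=x])
      show "x \<in> {1..n} \<and> p x = 0" using 1[of x] by simp
    next
      fix y assume "y \<in> {1..n} \<and> p y = 0" then show "y = x" using 1[of y] by simp
    qed
  next
    assume "\<exists>!r. r \<in> {1..n} \<and> p r = 0"
    then obtain r where r: "r \<in> {1..n} \<and> p r = 0" and H: "\<forall>y. y \<in> {1..n} \<and> p y = 0 \<longrightarrow> y = r" by blast
    have "{v\<in>{1..n}. p v = 0} = {r}"
    proof (intro set_eqI iffI)
      fix v assume "v \<in> {v\<in>{1..n}. p v = 0}" then show "v \<in> {r}" using H[rule_format, of v] by simp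
    next
      fix v assume "v \<in> {r}" then show "v \<in> {v\<in>{1..n}. p v = 0}" using r by simp
    qed
    then show "\<exists>x. {v\<in>{1..n}. p v = 0} = {x}" by blast
  qed
  finally show ?thesis .
qed

lemma reach_of_rank:
  assumes g: "good n p" and r: "rkd n p rk" and v: "v \<in> {1..n}"
  shows "\<exists>k. (p ^^ k) v = 0"
  using v
proof (induction v rule: measure_induct_rule[of rk])
  case (less v)
  show ?case
  proof (cases "p v = 0")
    case True
    then have "(p ^^ 1) v = 0" by simp
    then show ?thesis by blast
  next
    case False
    then have pv: "p v \<in> {1..n}" using g by (auto simp: good_def)
    have "rk (p v) < rk v" using r less.prems False by (auto simp: rkd_def)
    then obtain k where "(p ^^ k) (p v) = 0" using less.IH pv by blast
    then have "(p ^^ Suc k) v = 0" by (simp only: funpow_Suc_right comp_def)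
    then show ?thesis by blast
  qed
qed

lemma tree_rank:
  assumes t: "is_tree n p"
  shows "rkd n p (\<lambda>v. LEAST k. (p ^^ k) v = 0)"
  unfolding rkd_def
proof (intro ballI impI)
  fix v assume v: "v \<in> {1..n}" and pv: "p v \<noteq> 0"
  let ?rk = "\<lambda>v. LEAST k. (p ^^ k) v = 0"
  have reach: "\<forall>v\<in>{1..n}. \<exists>k. (p ^^ k) v = 0" using t unfolding is_tree_def by (elim conjE) assumption
  from reach v obtain k where k: "(p ^^ k) v = 0" by blast
  have m: "(p ^^ ?rk v) v = 0" using k by (rule LeastI)
  have "?rk v \<noteq> 0"
  proof
    assume "?rk v = 0"
    then have "v = 0" using m by simp
    then show False using v by simp
  qed
  then obtain m' where m': "?rk v = Suc m'" by (cases "?rk v") auto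
  then have "(p ^^ m') (p v) = 0" using m by (simp only: funpow_Suc_right comp_def)
  then have "?rk (p v) \<le> m'" by (rule Least_le)
  then show "?rk (p v) < ?rk v" using m' by simp
qed

lemma tree_iff: "is_tree n p \<longleftrightarrow> good n p \<and> (\<exists>!r. r \<in> {1..n} \<and> p r = 0) \<and> (\<exists>rk. rkd n p rk)"
proof
  assume t: "is_tree n p"
  have o: "\<forall>v. v \<notin> {1..n} \<longrightarrow> p v = 0"
    using t unfolding is_tree_def by (elim conjE) assumption
  have l: "\<forall>v\<in>{1..n}. p v \<le> n"
    using t unfolding is_tree_def by (elim conjE) assumption
  have "p v \<le> n" for v
  proof (cases "v \<in> {1..n}")
    case True then show ?thesis using l by blast
  next
    case False then show ?thesis using o by simp
  qed
  then have "good n p" using o unfolding good_def by blast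
  moreover have "card {v\<in>{1..n}. p v = 0} = 1" using t unfolding is_tree_def by (elim conjE) assumption
  then have "\<exists>!r. r \<in> {1..n} \<and> p r = 0" using card1_iff by blast
  moreover have "\<exists>rk. rkd n p rk" using tree_rank[OF t] by blast
  ultimately show "good n p \<and> (\<exists>!r. r \<in> {1..n} \<and> p r = 0) \<and> (\<exists>rk. rkd n p rk)" by blast
next
  assume h: "good n p \<and> (\<exists>!r. r \<in> {1..n} \<and> p r = 0) \<and> (\<exists>rk. rkd n p rk)"
  then obtain rk where r: "rkd n p rk" by blast
  have g: "good n p" using h by blast
  show "is_tree n p" unfolding is_tree_def
  proof (intro conjI)
    show "\<forall>v. v \<notin> {1..n} \<longrightarrow> p v = 0" using g unfolding good_def by blast
    show "\<forall>v\<in>{1..n}. p v \<le> n" using g unfolding good_def by blast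
    have "\<exists>!r. r \<in> {1..n} \<and> p r = 0" using h by blast
    then show "card {v \<in> {1..n}. p v = 0} = 1" using card1_iff by blast
    show "\<forall>v\<in>{1..n}. \<exists>k. (p ^^ k) v = 0" using reach_of_rank[OF g r] by blast
  qed
qed

lemma good_out: "good n p \<Longrightarrow> v \<notin> {1..n} \<Longrightarrow> p v = 0" unfolding good_def by blast
lemma good_le: "good n p \<Longrightarrow> p v \<le> n" unfolding good_def by blast
lemma good_0: "good n p \<Longrightarrow> p 0 = 0" using good_out[of n p 0] by simp
lemma good_in: "good n p \<Longrightarrow> p v \<noteq> 0 \<Longrightarrow> p v \<in> {1..n}"
proof -
  assume "good n p" "p v \<noteq> 0"
  then have "p v \<le> n" "1 \<le> p v" using good_le[of n p v] by auto
  then show ?thesis by simp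
qed
lemma rkd_lt: "rkd n p rk \<Longrightarrow> v \<in> {1..n} \<Longrightarrow> p v \<noteq> 0 \<Longrightarrow> rk (p v) < rk v"
  unfolding rkd_def by blast

lemma rank_anc:
  assumes g: "good n p" and r: "rkd n p rk"
  shows "c \<in> {1..n} \<Longrightarrow> (p ^^ k) (p c) \<noteq> 0 \<Longrightarrow> rk ((p ^^ k) (p c)) < rk c"
proof (induction k arbitrary: c)
  case 0
  then show ?case using rkd_lt[OF r] by simp
next
  case (Suc k)
  have p0: "p 0 = 0" using good_0[OF g] .
  have e: "(p ^^ Suc k) (p c) = (p ^^ k) (p (p c))" by (simp only: funpow_Suc_right comp_def)
  have "p c \<noteq> 0"
  proof
    assume "p c = 0"
    then have "(p ^^ k) (p (p c)) = 0" using funpow_fix0[of p, OF p0] p0 by simp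
    then show False using Suc.prems e by simp
  qed
  then have pc: "p c \<in> {1..n}" using good_in[OF g] by blast
  have "(p ^^ k) (p (p c)) \<noteq> 0" using Suc.prems e by simp
  then have "rk ((p ^^ k) (p (p c))) < rk (p c)" using Suc.IH[OF pc] by blast
  moreover have "rk (p c) < rk c" using rkd_lt[OF r] Suc.prems \<open>p c \<noteq> 0\<close> by blast
  ultimately show ?case using e by simp
qed

lemma rank_anc':
  assumes g: "good n p" and r: "rkd n p rk" and c: "c \<in> {1..n}"
    and x: "x \<in> anc p (p c)" and x0: "x \<noteq> 0"
  shows "rk x < rk c"
proof -
  obtain k where "x = (p ^^ k) (p c)" using x by (auto simp: anc_def)
  then show ?thesis using rank_anc[OF g r c, of k] x0 by simp
qed

lemma no_cycle:
  assumes g: "good n p" and r: "rkd n p rk" and c: "c \<in> {1..n}"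
  shows "c \<notin> anc p (p c)"
proof
  assume "c \<in> anc p (p c)"
  moreover have "c \<noteq> 0" using c by simp
  ultimately have "rk c < rk c" using rank_anc'[OF g r c] by blast
  then show False by simp
qed

lemma KK_unfold: "KKG 0 i (Suc i) (p i) (p (Suc i)) \<longleftrightarrow> p (Suc i) = 0 \<or> (p i \<noteq> Suc i \<and> p (Suc i) \<noteq> i \<and> p i \<noteq> p (Suc i))"
  by (simp add: KKG_def)

lemma sig_K1: "\<not> KKG 0 i (Suc i) (p i) (p (Suc i)) \<Longrightarrow> p (Suc i) = i \<Longrightarrow> sigma i p = p(i := Suc i, Suc i := p i)"
  unfolding sigma_def Let_def KKG_def by auto
lemma sig_K2: "\<not> KKG 0 i (Suc i) (p i) (p (Suc i)) \<Longrightarrow> p (Suc i) \<noteq> i \<Longrightarrow> p i = Suc i \<Longrightarrow>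
   sigma i p = (\<lambda>x. if x = i \<or> x = Suc i then p (Suc i) else swp i (p x))"
  unfolding sigma_def Let_def KKG_def xch_def swp_def by (rule ext) auto
lemma sig_K3: "\<not> KKG 0 i (Suc i) (p i) (p (Suc i)) \<Longrightarrow> p (Suc i) \<noteq> i \<Longrightarrow> p i \<noteq> Suc i \<Longrightarrow>
   sigma i p = (\<lambda>x. if x = i then p i else if x = Suc i then i else swp i (p x))"
  unfolding sigma_def Let_def KKG_def xch_def swp_def by (rule ext) auto

lemma swp_swp[simp]: "swp i (swp i x) = x" by (simp add: swp_def)
lemma swp_i[simp]: "swp i i = Suc i" and swp_Si[simp]: "swp i (Suc i) = i"
  by (simp_all add: swp_def)
lemma swp_other: "x \<noteq> i \<Longrightarrow> x \<noteq> Suc i \<Longrightarrow> swp i x = x" by (simp add: swp_def)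

lemma swp_0: "1 \<le> i \<Longrightarrow> swp i 0 = 0" by (simp add: swp_def)
lemma swp_in: "1 \<le> i \<Longrightarrow> Suc i \<le> n \<Longrightarrow> v \<in> {1..n} \<Longrightarrow> swp i v \<in> {1..n}"
  by (auto simp: swp_def)
lemma swp_notin: "1 \<le> i \<Longrightarrow> Suc i \<le> n \<Longrightarrow> v \<notin> {1..n} \<Longrightarrow> swp i v = v"
  by (auto simp: swp_def)
lemma swp_le: "Suc i \<le> n \<Longrightarrow> v \<le> n \<Longrightarrow> swp i v \<le> n"
  by (auto simp: swp_def)

lemma sig_zero: "1 \<le> i \<Longrightarrow> sigma i p v = 0 \<longleftrightarrow> p (swp i v) = 0"
  by (cases "v = i \<or> v = Suc i")
     (auto simp: VaG_def VbG_def GenG_def KKG_def swpG_def swp_def)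

lemma sig_good:
  assumes g: "good n p" and i: "1 \<le> i" "Suc i \<le> n"
  shows "good n (sigma i p)"
proof -
  have o: "sigma i p v = 0" if "v \<notin> {1..n}" for v
  proof -
    have "swp i v = v" using swp_notin[OF i that] .
    then show ?thesis using sig_zero[OF i(1), of p v] good_out[OF g that] by simp
  qed
  have S: "p x \<in> {..n}" for x using good_le[OF g] by simp
  have ab: "i \<in> {..n}" "Suc i \<in> {..n}" using i by auto
  have l: "sigma i p v \<le> n" for v
  proof (cases "v = i \<or> v = Suc i")
    case True
    then show ?thesis using mem_VaG[OF ab S S] mem_VbG[OF ab S S] by auto
  next
    case False
    then show ?thesis using mem_GenG[OF ab S] by auto
  qed
  show ?thesis unfolding good_def using o l by blast
qed

lemma sig_root:
  assumes g: "good n p" and i: "1 \<le> i" "Suc i \<le> n" and r: "\<exists>!r. r \<in> {1..n} \<and> p r = 0"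
  shows "\<exists>!r. r \<in> {1..n} \<and> sigma i p r = 0"
proof -
  obtain r where r1: "r \<in> {1..n}" "p r = 0" and r2: "\<And>y. y \<in> {1..n} \<Longrightarrow> p y = 0 \<Longrightarrow> y = r"
    using r by blast
  show ?thesis
  proof (rule ex1I[where a="swp i r"])
    show "swp i r \<in> {1..n} \<and> sigma i p (swp i r) = 0"
      using swp_in[OF i r1(1)] sig_zero[OF i(1)] r1(2) by simp
  next
    fix y assume y: "y \<in> {1..n} \<and> sigma i p y = 0"
    then have "p (swp i y) = 0" using sig_zero[OF i(1), of p y] by simp
    then have "swp i y = r" using r2 swp_in[OF i] y by blast
    then show "y = swp i r" by (metis swp_swp)
  qed
qed

lemma sig_rank:
  assumes g: "good n p" and i: "1 \<le> i" "Suc i \<le> n" and r: "rkd n p rk"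
  shows "\<exists>rk'. rkd n (sigma i p) rk'"
proof -
  have ai: "i \<in> {1..n}" and bi: "Suc i \<in> {1..n}" using i by auto
  have lt: "\<And>v. v \<in> {1..n} \<Longrightarrow> p v \<noteq> 0 \<Longrightarrow> rk (p v) < rk v" using rkd_lt[OF r] by blast
  have pin: "\<And>v. p v \<noteq> 0 \<Longrightarrow> p v \<in> {1..n}" using good_in[OF g] by blast
  show ?thesis
  proof (cases "KKG 0 i (Suc i) (p i) (p (Suc i))")
    case True
    then have q: "sigma i p = swp i \<circ> p \<circ> swp i" by (rule sig_K0)
    have "rkd n (sigma i p) (rk \<circ> swp i)"
      unfolding rkd_def
    proof (intro ballI impI)
      fix v assume v: "v \<in> {1..n}" and qv: "sigma i p v \<noteq> 0"
      have sv: "swp i v \<in> {1..n}" using swp_in[OF i v] .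
      have "p (swp i v) \<noteq> 0" using qv sig_zero[OF i(1), of p v] by simp
      then show "(rk \<circ> swp i) (sigma i p v) < (rk \<circ> swp i) v" using lt[OF sv] q by simp
    qed
    then show ?thesis by blast
  next
    case nK: False
    then have pb0: "p (Suc i) \<noteq> 0" by (simp add: KKG_def)
    show ?thesis
    proof (cases "p (Suc i) = i")
      case K1: True
      define k where "k = p i"
      have q: "sigma i p = p(i := Suc i, Suc i := k)" using sig_K1[OF nK K1] k_def by simp
      have ra: "rk i < rk (Suc i)" using lt[OF bi pb0] K1 by simp
      have k1: "k \<noteq> 0 \<Longrightarrow> rk k < rk i" using lt[OF ai] k_def by simp
      have k2: "k \<noteq> i" using k1 i(1) by fastforce
      have k3: "k \<noteq> Suc i" using k1 ra by auto
      define r' where "r' v = (if v = Suc i then 3 * rk i + 1 else if v = i then 3 * rk i + 2 else 3 * rk v)" for v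
      have "rkd n (sigma i p) r'"
        unfolding rkd_def
      proof (intro ballI impI)
        fix v assume v: "v \<in> {1..n}" and qv: "sigma i p v \<noteq> 0"
        show "r' (sigma i p v) < r' v"
        proof (cases "v = i")
          case True then show ?thesis using q by (simp add: r'_def)
        next
          case va: False
          show ?thesis
          proof (cases "v = Suc i")
            case True then show ?thesis using q qv k1 k2 k3 by (simp add: r'_def)
          next
            case vb: False
            have pv: "p v \<noteq> 0" using qv q va vb by simp
            have "rk (p v) < rk v" using lt[OF v pv] .
            then show ?thesis using q va vb ra by (auto simp: r'_def)
          qed
        qed
      qed
      then show ?thesis by blast
    next
      case nK1: False
      show ?thesis
      proof (cases "p i = Suc i")
        case K2: True
        define k where "k = p (Suc i)"
        have q: "sigma i p = (\<lambda>x. if x = i \<or> x = Suc i then k else swp i (p x))"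
          using sig_K2[OF nK nK1 K2] unfolding k_def .
        have ra: "rk (Suc i) < rk i" using lt[OF ai] K2 by simp
        have k1: "rk k < rk (Suc i)" using lt[OF bi pb0] k_def by simp
        have k0: "k \<noteq> 0" using pb0 k_def by simp
        define r' where "r' v = (if v = i \<or> v = Suc i then 3 * rk (Suc i) + 1 else 3 * rk v)" for v
        have "rkd n (sigma i p) r'"
          unfolding rkd_def
        proof (intro ballI impI)
          fix v assume v: "v \<in> {1..n}" and qv: "sigma i p v \<noteq> 0"
          show "r' (sigma i p v) < r' v"
          proof (cases "v = i \<or> v = Suc i")
            case True then show ?thesis using q k1 ra by (auto simp: r'_def)
          next
            case vab: False
            have pv: "p v \<noteq> 0"
            proof
              assume "p v = 0" then have "sigma i p v = 0" using q vab swp_0[OF i(1)] by simp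
              then show False using qv by simp
            qed
            have "rk (p v) < rk v" using lt[OF v pv] .
            then show ?thesis using q vab ra by (auto simp: r'_def swp_def)
          qed
        qed
        then show ?thesis by blast
      next
        case nK2: False
        have eq: "p i = p (Suc i)" using nK nK1 nK2 by (simp add: KKG_def)
        have q: "sigma i p = (\<lambda>x. if x = i then p i else if x = Suc i then i else swp i (p x))"
          using sig_K3[OF nK nK1 nK2] .
        have k1: "rk (p i) < rk i" using lt[OF ai] eq pb0 by simp
        have k2: "rk (p i) < rk (Suc i)" using lt[OF bi pb0] eq by simp
        define m where "m = min (rk i) (rk (Suc i))"
        define r' where "r' v = (if v = i then 3 * m + 1 else if v = Suc i then 3 * m + 2 else 3 * rk v)" for v
        have pi_ne: "p i \<noteq> i" "p i \<noteq> Suc i" using k1 nK2 by auto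
        have "rkd n (sigma i p) r'"
          unfolding rkd_def
        proof (intro ballI impI)
          fix v assume v: "v \<in> {1..n}" and qv: "sigma i p v \<noteq> 0"
          show "r' (sigma i p v) < r' v"
          proof (cases "v = i")
            case True then show ?thesis using q k1 k2 pi_ne by (auto simp: r'_def m_def)
          next
            case va: False
            show ?thesis
            proof (cases "v = Suc i")
              case True then show ?thesis using q by (auto simp: r'_def)
            next
              case vb: False
              have pv: "p v \<noteq> 0"
              proof
                assume "p v = 0" then have "sigma i p v = 0" using q va vb swp_0[OF i(1)] by simp
                then show False using qv by simp
              qed
              have "rk (p v) < rk v" using lt[OF v pv] .
              then show ?thesis using q va vb by (auto simp: r'_def swp_def m_def)
            qed
          qed
        qed
        then show ?thesis by blast
      qed
    qed
  qed
qed

lemma sigma_tree: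
  assumes t: "is_tree n p" and i: "1 \<le> i" "Suc i \<le> n"
  shows "is_tree n (sigma i p)"
proof -
  from t obtain rk where g: "good n p" and r: "\<exists>!r. r \<in> {1..n} \<and> p r = 0" and rk: "rkd n p rk"
    unfolding tree_iff by blast
  show ?thesis unfolding tree_iff
    using sig_good[OF g i] sig_root[OF g i r] sig_rank[OF g i rk] by blast
qed

lemma inj_loc:
  assumes d: "z \<noteq> a" "z \<noteq> b" "a \<noteq> b"
    and v1: "u \<noteq> a" "w \<noteq> b" "\<not> (u = b \<and> w = a)" "\<not> (u = z \<and> w = z)"
    and v2: "u' \<noteq> a" "w' \<noteq> b" "\<not> (u' = b \<and> w' = a)" "\<not> (u' = z \<and> w' = z)"
    and e1: "VaG z a b u w = VaG z a b u' w'" and e2: "VbG z a b u w = VbG z a b u' w'"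
  shows "u = u' \<and> w = w'"
  using assms unfolding VaG_def VbG_def KKG_def swpG_def
  by (auto split: if_splits)

lemma GenG_inj: "GenG z a b u w v = GenG z a b u w v' \<Longrightarrow> v = v'"
  unfolding GenG_def by (auto split: if_splits simp: swpG_inj)

lemma tree_facts:
  assumes t: "is_tree n p" and x: "x \<in> {1..n}" and y: "y \<in> {1..n}" and w: "w \<in> {1..n}"
  shows "p x \<noteq> x" and "x \<noteq> y \<Longrightarrow> \<not> (p x = 0 \<and> p y = 0)" and "\<not> (p x = y \<and> p y = x)"
    and "\<not> (p x = y \<and> p y = w \<and> p w = x)"
proof -
  from t obtain rk where g: "good n p" and r: "\<exists>!r. r \<in> {1..n} \<and> p r = 0" and rk: "rkd n p rk"
    unfolding tree_iff by blast
  have lt: "\<And>v. v \<in> {1..n} \<Longrightarrow> p v \<noteq> 0 \<Longrightarrow> rk (p v) < rk v" using rkd_lt[OF rk] by blast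
  have x0: "x \<noteq> 0" and y0: "y \<noteq> 0" and w0: "w \<noteq> 0" using x y w by auto
  show "p x \<noteq> x" using lt[OF x] x0 by fastforce
  show "x \<noteq> y \<Longrightarrow> \<not> (p x = 0 \<and> p y = 0)" using r x y by blast
  show "\<not> (p x = y \<and> p y = x)"
  proof
    assume "p x = y \<and> p y = x"
    then have "rk y < rk x" "rk x < rk y" using lt[OF x] lt[OF y] x0 y0 by fastforce+
    then show False by simp
  qed
  show "\<not> (p x = y \<and> p y = w \<and> p w = x)"
  proof
    assume "p x = y \<and> p y = w \<and> p w = x"
    then have "rk y < rk x" "rk w < rk y" "rk x < rk w" using lt[OF x] lt[OF y] lt[OF w] x0 y0 w0 by fastforce+
    then show False by simp
  qed
qed

lemma sigma_inj:
  assumes t: "is_tree n p" and t': "is_tree n p'" and i: "1 \<le> i" "Suc i \<le> n"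
    and e: "sigma i p = sigma i p'"
  shows "p = p'"
proof -
  have ai: "i \<in> {1..n}" and bi: "Suc i \<in> {1..n}" using i by auto
  have d: "0 \<noteq> i" "0 \<noteq> Suc i" "i \<noteq> Suc i" using i by auto
  note f = tree_facts[OF t ai bi bi] tree_facts[OF t bi bi bi]
  note f' = tree_facts[OF t' ai bi bi] tree_facts[OF t' bi bi bi]
  have e1: "VaG 0 i (Suc i) (p i) (p (Suc i)) = VaG 0 i (Suc i) (p' i) (p' (Suc i))"
    using fun_cong[OF e, of i] by simp
  have e2: "VbG 0 i (Suc i) (p i) (p (Suc i)) = VbG 0 i (Suc i) (p' i) (p' (Suc i))"
    using fun_cong[OF e, of "Suc i"] by simp
  have ab: "p i = p' i \<and> p (Suc i) = p' (Suc i)"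
    by (rule inj_loc[OF d _ _ _ _ _ _ _ _ e1 e2]) (use f f' in auto)
  show "p = p'"
  proof
    fix x
    show "p x = p' x"
    proof (cases "x = i \<or> x = Suc i")
      case True then show ?thesis using ab by auto
    next
      case False
      then have "GenG 0 i (Suc i) (p i) (p (Suc i)) (p x) = GenG 0 i (Suc i) (p i) (p (Suc i)) (p' x)"
        using fun_cong[OF e, of x] ab by simp
      then show ?thesis by (rule GenG_inj)
    qed
  qed
qed

lemma anc_closed: "x \<in> anc p c \<Longrightarrow> p x \<in> anc p c"
proof -
  assume x: "x \<in> anc p c"
  have "p x \<in> anc p x" using anc_iff[of "p x" p x] by simp
  then show ?thesis using anc_trans[OF x] by blast
qed

lemma avoid:
  assumes h: "\<And>x. x \<in> anc p c \<Longrightarrow> q x = p x"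
  shows "anc q c = anc p c"
proof -
  have "(q ^^ k) c = (p ^^ k) c" for k
  proof (induction k)
    case 0 then show ?case by simp
  next
    case (Suc k)
    have "(p ^^ k) c \<in> anc p c" by (auto simp: anc_def)
    then show ?case using Suc h by simp
  qed
  then show ?thesis by (simp add: anc_def)
qed

lemma anc_gen:
  fixes p q h :: "nat \<Rightarrow> nat" and G :: "nat set \<Rightarrow> nat set"
  assumes g: "good n p" and r: "rkd n p rk" and a0: "a \<noteq> 0" and b0: "b \<noteq> 0"
    and q0: "q 0 = 0" and h0: "h 0 = 0" and hid: "\<And>x. x \<noteq> a \<Longrightarrow> x \<noteq> b \<Longrightarrow> h x = x"
    and qh: "\<And>c. c \<noteq> a \<Longrightarrow> c \<noteq> b \<Longrightarrow> q c = h (p c)"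
    and Gins: "\<And>c S. c \<noteq> a \<Longrightarrow> c \<noteq> b \<Longrightarrow> G (insert c S) = insert c (G S)"
    and G0: "G {0} = {0}"
    and la: "anc q (h a) = G (anc p a)" and lb: "anc q (h b) = G (anc p b)"
  shows "c \<noteq> a \<Longrightarrow> c \<noteq> b \<Longrightarrow> anc q c = G (anc p c)"
proof (induction c rule: measure_induct_rule[of rk])
  case (less c)
  have p0: "p 0 = 0" using good_0[OF g] .
  have ec: "anc q c = insert c (anc q (q c))" "anc p c = insert c (anc p (p c))" using anc_rec by blast+
  have qc: "q c = h (p c)" using qh less.prems by blast
  show ?case
  proof (cases "p c = 0")
    case True
    then have "anc q c = insert c {0}" using ec qc h0 anc_0[of q, OF q0] by simp
    moreover have "anc p c = insert c {0}" using ec True anc_0[of p, OF p0] by simp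
    ultimately show ?thesis using Gins[OF less.prems] G0 by simp
  next
    case pc0: False
    show ?thesis
    proof (cases "p c = a \<or> p c = b")
      case True
      then have "anc q (q c) = G (anc p (p c))" using la lb qc by auto
      then show ?thesis using ec Gins[OF less.prems] by simp
    next
      case False
      then have qc': "q c = p c" using qc hid by simp
      have cin: "c \<in> {1..n}"
      proof (rule ccontr)
        assume "c \<notin> {1..n}" then have "p c = 0" by (rule good_out[OF g])
        with pc0 show False by simp
      qed
      have "rk (p c) < rk c" using rkd_lt[OF r cin pc0] .
      then have "anc q (p c) = G (anc p (p c))" using less.IH False by blast
      then show ?thesis using ec qc' Gins[OF less.prems] by simp
    qed
  qed
qed

definition DD :: "nat \<Rightarrow> (nat \<Rightarrow> nat) \<Rightarrow> nat \<Rightarrow> nat set" where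
  "DD n p v = {c\<in>{1..n}. v \<in> anc p c}"

lemma size_DD: "subtree_size n p v = card (DD n p v)"
  by (simp add: size_anc DD_def)

lemma DD_fin[simp]: "finite (DD n p v)" by (simp add: DD_def)

lemma DD_sub: "v \<in> anc p w \<Longrightarrow> DD n p w \<subseteq> DD n p v"
  unfolding DD_def using anc_trans by blast

lemma tree_parts:
  assumes t: "is_tree n p"
  obtains rk where "good n p" "rkd n p rk" "\<exists>!r. r \<in> {1..n} \<and> p r = 0"
  using t unfolding tree_iff by blast

lemma anc_not_up:
  assumes g: "good n p" and r: "rkd n p rk" and v: "v \<in> {1..n}" and x: "x \<in> anc p (p v)"
  shows "v \<notin> anc p x"
proof
  assume "v \<in> anc p x"
  then have "v \<in> anc p (p v)" using anc_trans[OF x] by blast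
  then show False using no_cycle[OF g r v] by blast
qed

lemma parent_in_anc: "p v \<in> anc p v"
  using anc_iff[of "p v" p v] by simp

lemma DD_K1:
  assumes t: "is_tree n p" and i: "1 \<le> i" "Suc i \<le> n"
    and nK: "\<not> KKG 0 i (Suc i) (p i) (p (Suc i))" and K1: "p (Suc i) = i"
  shows "DD n (sigma i p) i = DD n p i - DD n p (Suc i)"
    and "DD n (sigma i p) (Suc i) = DD n p i"
    and "v \<noteq> i \<Longrightarrow> v \<noteq> Suc i \<Longrightarrow> DD n (sigma i p) v = DD n p v"
proof -
  obtain rk where g: "good n p" and r: "rkd n p rk" using tree_parts[OF t] by blast
  define a where "a = i"
  define b where "b = Suc i"
  define k where "k = p a"
  define q where "q = sigma i p"
  have ai: "a \<in> {1..n}" and bi: "b \<in> {1..n}" using i by (auto simp: a_def b_def)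
  have ab: "a \<noteq> b" "a \<noteq> 0" "b \<noteq> 0" using i by (auto simp: a_def b_def)
  have pb: "p b = a" using K1 by (simp add: a_def b_def)
  have q_eq: "q = p(a := b, b := k)" using sig_K1[OF nK K1] by (simp add: q_def a_def b_def k_def)
  have nak: "a \<notin> anc p k" using no_cycle[OF g r ai] by (simp add: k_def)
  have nbk: "b \<notin> anc p k"
  proof
    assume "b \<in> anc p k"
    moreover have "a \<in> anc p b" using parent_in_anc[of p b] pb by simp
    ultimately have "a \<in> anc p k" using anc_trans by blast
    then show False using nak by simp
  qed
  have qk: "anc q k = anc p k"
  proof (rule avoid)
    fix x assume "x \<in> anc p k"
    then have "x \<noteq> a" "x \<noteq> b" using nak nbk by auto
    then show "q x = p x" using q_eq by simp
  qed
  have ancpa: "anc p a = insert a (anc p k)" using anc_rec[of p a] by (simp add: k_def)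
  have ancpb: "anc p b = insert b (anc p a)" using anc_rec[of p b] pb by simp
  have ancqb: "anc q b = insert b (anc p k)" using anc_rec[of q b] q_eq qk ab by simp
  have "q a = b" using q_eq ab by simp
  then have ancqa: "anc q a = insert a (anc q b)" using anc_rec[of q a] by simp
  define F where "F S = (if b \<in> S then S - {a} else if a \<in> S then insert b S else S)" for S
  have Fa: "anc q a = F (anc p a)" using ancqa ancqb ancpa nak nbk ab by (auto simp: F_def)
  have Fb: "anc q b = F (anc p b)" using ancqb ancpb ancpa nak nbk ab by (auto simp: F_def)
  have Fc: "anc q c = F (anc p c)" for c
  proof (cases "c = a \<or> c = b")
    case True then show ?thesis using Fa Fb by auto
  next
    case False
    show ?thesis
    proof (rule anc_gen[OF g r ab(2) ab(3), where h=id])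
      show "q 0 = 0" using q_eq good_0[OF g] ab by simp
      show "\<And>c. c \<noteq> a \<Longrightarrow> c \<noteq> b \<Longrightarrow> q c = id (p c)" using q_eq by simp
      show "\<And>c S. c \<noteq> a \<Longrightarrow> c \<noteq> b \<Longrightarrow> F (insert c S) = insert c (F S)" by (auto simp: F_def)
      show "F {0} = {0}" using ab by (simp add: F_def)
      show "anc q (id a) = F (anc p a)" using Fa by simp
      show "anc q (id b) = F (anc p b)" using Fb by simp
    qed (use False in auto)
  qed
  have memF: "x \<in> F S \<longleftrightarrow> (if x = a then a \<in> S \<and> b \<notin> S else if x = b then a \<in> S \<or> b \<in> S else x \<in> S)" for x S
    using ab by (auto simp: F_def)
  have sub: "DD n p b \<subseteq> DD n p a"
    by (rule DD_sub) (use parent_in_anc[of p b] pb in simp)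
  have r1: "DD n q a = DD n p a - DD n p b"
    unfolding DD_def using Fc memF ab by auto
  then show "DD n (sigma i p) i = DD n p i - DD n p (Suc i)" by (simp add: q_def a_def b_def)
  have "DD n q b = DD n p a \<union> DD n p b"
    unfolding DD_def using Fc memF ab by auto
  then show "DD n (sigma i p) (Suc i) = DD n p i"
    using sub by (auto simp: q_def a_def b_def)
  show "DD n (sigma i p) v = DD n p v" if "v \<noteq> i" "v \<noteq> Suc i"
  proof -
    have "v \<noteq> a" "v \<noteq> b" using that by (auto simp: a_def b_def)
    then have "DD n q v = DD n p v" unfolding DD_def using Fc memF by auto
    then show ?thesis by (simp add: q_def)
  qed
qed

lemma DD_K2:
  assumes t: "is_tree n p" and i: "1 \<le> i" "Suc i \<le> n"
    and nK: "\<not> KKG 0 i (Suc i) (p i) (p (Suc i))" and nK1: "p (Suc i) \<noteq> i" and K2: "p i = Suc i"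
  shows "DD n (sigma i p) i = insert i (DD n p (Suc i) - DD n p i - {Suc i})"
    and "DD n (sigma i p) (Suc i) = insert (Suc i) (DD n p i - {i})"
    and "v \<noteq> i \<Longrightarrow> v \<noteq> Suc i \<Longrightarrow> DD n (sigma i p) v = DD n p v"
proof -
  obtain rk where g: "good n p" and r: "rkd n p rk" using tree_parts[OF t] by blast
  define a where "a = i"
  define b where "b = Suc i"
  define k where "k = p b"
  define q where "q = sigma i p"
  have ai: "a \<in> {1..n}" and bi: "b \<in> {1..n}" using i by (auto simp: a_def b_def)
  have ab: "a \<noteq> b" "a \<noteq> 0" "b \<noteq> 0" using i by (auto simp: a_def b_def)
  have pa: "p a = b" using K2 by (simp add: a_def b_def)
  have q_eq: "q = (\<lambda>x. if x = a \<or> x = b then k else swp i (p x))"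
    using sig_K2[OF nK nK1 K2] unfolding q_def k_def b_def a_def by simp
  have nbk: "b \<notin> anc p k" using no_cycle[OF g r bi] by (simp add: k_def)
  have nak: "a \<notin> anc p k"
  proof
    assume "a \<in> anc p k"
    moreover have "b \<in> anc p a" using parent_in_anc[of p a] pa by simp
    ultimately have "b \<in> anc p k" using anc_trans by blast
    then show False using nbk by simp
  qed
  have qk: "anc q k = anc p k"
  proof (rule avoid)
    fix x assume x: "x \<in> anc p k"
    then have "x \<noteq> a" "x \<noteq> b" using nak nbk by auto
    moreover have "p x \<noteq> a" "p x \<noteq> b" using anc_closed[OF x] nak nbk by auto
    ultimately show "q x = p x" using q_eq by (simp add: swp_def a_def b_def)
  qed
  have ancpb: "anc p b = insert b (anc p k)" using anc_rec[of p b] by (simp add: k_def)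
  have ancpa: "anc p a = insert a (anc p b)" using anc_rec[of p a] pa by simp
  have "q a = k" "q b = k" using q_eq by simp_all
  then have ancqa: "anc q a = insert a (anc p k)" and ancqb: "anc q b = insert b (anc p k)"
    using anc_rec[of q a] anc_rec[of q b] qk by simp_all
  define F where "F S = (if a \<in> S then S - {a} else if b \<in> S then insert a (S - {b}) else S)" for S
  have la: "anc q (swp i a) = F (anc p a)"
    using ancqb ancpa ancpb nak nbk ab by (auto simp: F_def a_def b_def)
  have lb: "anc q (swp i b) = F (anc p b)"
    using ancqa ancpb nak nbk ab by (auto simp: F_def a_def b_def)
  have Fc: "anc q c = F (anc p c)" if "c \<noteq> a" "c \<noteq> b" for c
  proof (rule anc_gen[OF g r ab(2) ab(3), where h="swp i"])
    show "q 0 = 0" using q_eq good_0[OF g] ab swp_0[OF i(1)] by simp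
    show "swp i 0 = 0" using swp_0[OF i(1)] .
    show "\<And>x. x \<noteq> a \<Longrightarrow> x \<noteq> b \<Longrightarrow> swp i x = x" by (simp add: swp_def a_def b_def)
    show "\<And>c. c \<noteq> a \<Longrightarrow> c \<noteq> b \<Longrightarrow> q c = swp i (p c)" using q_eq by simp
    show "\<And>c S. c \<noteq> a \<Longrightarrow> c \<noteq> b \<Longrightarrow> F (insert c S) = insert c (F S)" by (auto simp: F_def)
    show "F {0} = {0}" using ab by (simp add: F_def)
  qed (use la lb that in auto)
  have memF: "x \<in> F S \<longleftrightarrow> (if x = a then a \<notin> S \<and> b \<in> S else if x = b then a \<in> S \<and> b \<in> S else x \<in> S)" for x S
    using ab by (auto simp: F_def)
  have ba: "b \<in> anc p c" if "a \<in> anc p c" for c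
    using anc_trans[OF that] parent_in_anc[of p a] pa by auto
  have r1: "DD n q a = insert a (DD n p b - DD n p a - {b})"
  proof -
    have "c \<in> DD n q a \<longleftrightarrow> c \<in> insert a (DD n p b - DD n p a - {b})" for c
    proof (cases "c = a \<or> c = b")
      case True then show ?thesis using ai ancqa ancqb ancpb nak nbk ab by (auto simp: DD_def)
    next
      case False then show ?thesis using Fc[of c] memF[of a] ab by (auto simp: DD_def)
    qed
    then show ?thesis by blast
  qed
  then show "DD n (sigma i p) i = insert i (DD n p (Suc i) - DD n p i - {Suc i})" by (simp add: q_def a_def b_def)
  have r2: "DD n q b = insert b (DD n p a - {a})"
  proof -
    have "c \<in> DD n q b \<longleftrightarrow> c \<in> insert b (DD n p a - {a})" for c
    proof (cases "c = a \<or> c = b")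
      case True then show ?thesis using bi ancqa ancqb ancpb ancpa nak nbk ab by (auto simp: DD_def)
    next
      case False then show ?thesis using Fc[of c] memF[of b] ba[of c] ab by (auto simp: DD_def)
    qed
    then show ?thesis by blast
  qed
  then show "DD n (sigma i p) (Suc i) = insert (Suc i) (DD n p i - {i})" by (simp add: q_def a_def b_def)
  show "DD n (sigma i p) v = DD n p v" if "v \<noteq> i" "v \<noteq> Suc i"
  proof -
    have v: "v \<noteq> a" "v \<noteq> b" using that by (auto simp: a_def b_def)
    have "c \<in> DD n q v \<longleftrightarrow> c \<in> DD n p v" for c
    proof (cases "c = a \<or> c = b")
      case True then show ?thesis using v ancqa ancqb ancpb ancpa by (auto simp: DD_def)
    next
      case False then show ?thesis using Fc[of c] memF[of v] v by (auto simp: DD_def)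
    qed
    then have "DD n q v = DD n p v" by blast
    then show ?thesis by (simp add: q_def)
  qed
qed

lemma DD_K3:
  assumes t: "is_tree n p" and i: "1 \<le> i" "Suc i \<le> n"
    and nK: "\<not> KKG 0 i (Suc i) (p i) (p (Suc i))" and nK1: "p (Suc i) \<noteq> i" and nK2: "p i \<noteq> Suc i"
  shows "DD n (sigma i p) i = DD n p i \<union> DD n p (Suc i)"
    and "DD n p i \<inter> DD n p (Suc i) = {}"
    and "DD n (sigma i p) (Suc i) = insert (Suc i) (DD n p i - {i})"
    and "Suc i \<notin> DD n p i - {i}"
    and "v \<noteq> i \<Longrightarrow> v \<noteq> Suc i \<Longrightarrow> DD n (sigma i p) v = DD n p v"
proof -
  obtain rk where g: "good n p" and r: "rkd n p rk" using tree_parts[OF t] by blast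
  define a where "a = i"
  define b where "b = Suc i"
  define k where "k = p a"
  define q where "q = sigma i p"
  have ai: "a \<in> {1..n}" and bi: "b \<in> {1..n}" using i by (auto simp: a_def b_def)
  have ab: "a \<noteq> b" "a \<noteq> 0" "b \<noteq> 0" using i by (auto simp: a_def b_def)
  have pb: "p b = k" using nK nK1 nK2 by (simp add: KKG_def k_def a_def b_def)
  have q_eq: "q = (\<lambda>x. if x = a then k else if x = b then a else swp i (p x))"
    using sig_K3[OF nK nK1 nK2] unfolding q_def k_def b_def a_def by simp
  have nak: "a \<notin> anc p k" using no_cycle[OF g r ai] by (simp add: k_def)
  have nbk: "b \<notin> anc p k" using no_cycle[OF g r bi] pb by simp
  have qk: "anc q k = anc p k"
  proof (rule avoid)
    fix x assume x: "x \<in> anc p k"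
    then have "x \<noteq> a" "x \<noteq> b" using nak nbk by auto
    moreover have "p x \<noteq> a" "p x \<noteq> b" using anc_closed[OF x] nak nbk by auto
    ultimately show "q x = p x" using q_eq by (simp add: swp_def a_def b_def)
  qed
  have ancpb: "anc p b = insert b (anc p k)" using anc_rec[of p b] pb by simp
  have ancpa: "anc p a = insert a (anc p k)" using anc_rec[of p a] by (simp add: k_def)
  have "q a = k" "q b = a" using q_eq ab by simp_all
  then have ancqa: "anc q a = insert a (anc p k)" and ancqb: "anc q b = insert b (insert a (anc p k))"
    using anc_rec[of q a] anc_rec[of q b] qk by simp_all
  define F where "F S = (if a \<in> S then insert b S else if b \<in> S then insert a (S - {b}) else S)" for S
  have la: "anc q (swp i a) = F (anc p a)"
    using ancqb ancpa nak nbk ab by (auto simp: F_def a_def b_def)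
  have lb: "anc q (swp i b) = F (anc p b)"
    using ancqa ancpb nak nbk ab by (auto simp: F_def a_def b_def)
  have Fc: "anc q c = F (anc p c)" if "c \<noteq> a" "c \<noteq> b" for c
  proof (rule anc_gen[OF g r ab(2) ab(3), where h="swp i"])
    show "q 0 = 0" using q_eq good_0[OF g] ab swp_0[OF i(1)] by simp
    show "swp i 0 = 0" using swp_0[OF i(1)] .
    show "\<And>x. x \<noteq> a \<Longrightarrow> x \<noteq> b \<Longrightarrow> swp i x = x" by (simp add: swp_def a_def b_def)
    show "\<And>c. c \<noteq> a \<Longrightarrow> c \<noteq> b \<Longrightarrow> q c = swp i (p c)" using q_eq by simp
    show "\<And>c S. c \<noteq> a \<Longrightarrow> c \<noteq> b \<Longrightarrow> F (insert c S) = insert c (F S)" by (auto simp: F_def)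
    show "F {0} = {0}" using ab by (simp add: F_def)
  qed (use la lb that in auto)
  have memF: "x \<in> F S \<longleftrightarrow> (if x = a then a \<in> S \<or> b \<in> S else if x = b then a \<in> S else x \<in> S)" for x S
    unfolding F_def using ab by (cases "a \<in> S"; cases "b \<in> S") auto
  have r1: "DD n q a = DD n p a \<union> DD n p b"
  proof -
    have "c \<in> DD n q a \<longleftrightarrow> c \<in> DD n p a \<union> DD n p b" for c
    proof (cases "c = a \<or> c = b")
      case True then show ?thesis by (elim disjE; (simp add: DD_def ai bi ancqa ancqb ancpb ancpa ai[simplified] bi[simplified] not_sym[OF ab(1)]); blast)
    next
      case False then show ?thesis using Fc[of c] memF[of a] ab by (auto simp: DD_def)
    qed
    then show ?thesis by blast
  qed
  then show "DD n (sigma i p) i = DD n p i \<union> DD n p (Suc i)" by (simp add: q_def a_def b_def)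
  have "DD n p a \<inter> DD n p b = {}"
  proof (rule ccontr)
    assume "DD n p a \<inter> DD n p b \<noteq> {}"
    then obtain c where "a \<in> anc p c" "b \<in> anc p c" by (auto simp: DD_def)
    then have "a \<in> anc p b \<or> b \<in> anc p a" using anc_chain by blast
    then show False using ancpa ancpb nak nbk ab by auto
  qed
  then show "DD n p i \<inter> DD n p (Suc i) = {}" by (simp add: a_def b_def)
  have r2: "DD n q b = insert b (DD n p a - {a})"
  proof -
    have "c \<in> DD n q b \<longleftrightarrow> c \<in> insert b (DD n p a - {a})" for c
    proof (cases "c = a \<or> c = b")
      case True then show ?thesis by (elim disjE; (simp add: DD_def bi ancqa ancqb ancpb ancpa nak nbk ab ai[simplified] bi[simplified] not_sym[OF ab(1)]); blast)
    next
      case False then show ?thesis using Fc[of c] memF[of b] ab by (auto simp: DD_def)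
    qed
    then show ?thesis by blast
  qed
  then show "DD n (sigma i p) (Suc i) = insert (Suc i) (DD n p i - {i})" by (simp add: q_def a_def b_def)
  have "b \<notin> DD n p a - {a}" using ancpb nak ab by (auto simp: DD_def)
  then show "Suc i \<notin> DD n p i - {i}" by (simp add: a_def b_def)
  show "DD n (sigma i p) v = DD n p v" if "v \<noteq> i" "v \<noteq> Suc i"
  proof -
    have v: "v \<noteq> a" "v \<noteq> b" using that by (auto simp: a_def b_def)
    have "c \<in> DD n q v \<longleftrightarrow> c \<in> DD n p v" for c
    proof (cases "c = a \<or> c = b")
      case True then show ?thesis by (elim disjE; (simp add: DD_def v ancqa ancqb ancpb ancpa ai[simplified] bi[simplified] not_sym[OF ab(1)]); blast)
    next
      case False then show ?thesis using Fc[of c] memF[of v] v by (auto simp: DD_def)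
    qed
    then have "DD n q v = DD n p v" by blast
    then show ?thesis by (simp add: q_def)
  qed
qed

definition SAfG :: "'a \<Rightarrow> 'a \<Rightarrow> 'a \<Rightarrow> 'a \<Rightarrow> 'a \<Rightarrow> 'b::ab_group_add \<Rightarrow> 'b \<Rightarrow> 'b" where
  "SAfG z a b u w Fa Fb = (if KKG z a b u w then Fb else if w = a then Fa - Fb else if u = b then Fb - Fa else Fa + Fb)"

lemma DD_self: "x \<in> {1..n} \<Longrightarrow> x \<in> DD n p x" by (simp add: DD_def)
lemma DD_par_sub: "DD n p x \<subseteq> DD n p (p x)" by (rule DD_sub) (rule parent_in_anc)
lemma DD_par_not: "is_tree n p \<Longrightarrow> x \<in> {1..n} \<Longrightarrow> p x \<notin> DD n p x"
proof -
  assume t: "is_tree n p" and x: "x \<in> {1..n}"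
  obtain rk where g: "good n p" and r: "rkd n p rk" using tree_parts[OF t] by blast
  show ?thesis using no_cycle[OF g r x] by (simp add: DD_def)
qed

lemma DD_card_pos: "x \<in> DD n p v \<Longrightarrow> Suc (card (DD n p v) - Suc 0) = card (DD n p v)"
proof -
  assume "x \<in> DD n p v"
  then have "DD n p v \<noteq> {}" by blast
  then have "0 < card (DD n p v)" by (simp add: card_gt_0_iff)
  then show ?thesis by simp
qed

lemma conj_pow: "((swp i \<circ> p \<circ> swp i) ^^ k) c = swp i ((p ^^ k) (swp i c))"
  by (induction k) auto

lemma DD_K0:
  assumes i: "1 \<le> i" "Suc i \<le> n" and K: "KKG 0 i (Suc i) (p i) (p (Suc i))"
  shows "card (DD n (sigma i p) v) = card (DD n p (swp i v))"
proof -
  have q: "sigma i p = swp i \<circ> p \<circ> swp i" using sig_K0[OF K] .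
  have a: "v \<in> anc (sigma i p) c \<longleftrightarrow> swp i v \<in> anc p (swp i c)" for c
  proof -
    have "v \<in> anc (sigma i p) c \<longleftrightarrow> (\<exists>k. v = swp i ((p ^^ k) (swp i c)))"
      unfolding q anc_def conj_pow by auto
    also have "\<dots> \<longleftrightarrow> (\<exists>k. swp i v = (p ^^ k) (swp i c))" by (metis swp_swp)
    also have "\<dots> \<longleftrightarrow> swp i v \<in> anc p (swp i c)" unfolding anc_def by auto
    finally show ?thesis .
  qed
  have cin: "c \<in> {1..n} \<longleftrightarrow> swp i c \<in> {1..n}" for c
  proof
    assume "c \<in> {1..n}" then show "swp i c \<in> {1..n}" by (rule swp_in[OF i])
  next
    assume "swp i c \<in> {1..n}" then have "swp i (swp i c) \<in> {1..n}" by (rule swp_in[OF i])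
    then show "c \<in> {1..n}" by simp
  qed
  have "DD n (sigma i p) v = swp i ` DD n p (swp i v)"
  proof (rule set_eqI)
    fix c
    have e: "c \<in> swp i ` DD n p (swp i v) \<longleftrightarrow> swp i c \<in> DD n p (swp i v)"
      by (metis image_iff swp_swp)
    have "c \<in> DD n (sigma i p) v \<longleftrightarrow> swp i c \<in> DD n p (swp i v)"
      unfolding DD_def mem_Collect_eq using a[of c] cin[of c] by blast
    then show "c \<in> DD n (sigma i p) v \<longleftrightarrow> c \<in> swp i ` DD n p (swp i v)"
      using e by blast
  qed
  moreover have "inj_on (swp i) X" for X by (metis inj_onI swp_swp)
  ultimately show ?thesis by (simp add: card_image)
qed

lemma size_sig:
  assumes t: "is_tree n p" and i: "1 \<le> i" "Suc i \<le> n"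
  shows "int (subtree_size n (sigma i p) v) =
    (if v = i then SAfG 0 i (Suc i) (p i) (p (Suc i)) (int (subtree_size n p i)) (int (subtree_size n p (Suc i)))
     else if v = Suc i then int (subtree_size n p i) else int (subtree_size n p v))"
proof -
  have ai: "i \<in> {1..n}" and bi: "Suc i \<in> {1..n}" using i by auto
  note sz = size_DD
  show ?thesis
  proof (cases "KKG 0 i (Suc i) (p i) (p (Suc i))")
    case True
    then show ?thesis unfolding sz SAfG_def using DD_K0[OF i True] by (simp add: swp_def)
  next
    case nK: False
    show ?thesis
    proof (cases "p (Suc i) = i")
      case K1: True
      have sub: "DD n p (Suc i) \<subseteq> DD n p i" using DD_par_sub[of n p "Suc i"] K1 by simp
      have c1: "card (DD n (sigma i p) i) = card (DD n p i) - card (DD n p (Suc i))"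
        using DD_K1(1)[OF t i nK K1] sub by (simp add: card_Diff_subset)
      have le: "card (DD n p (Suc i)) \<le> card (DD n p i)" using sub by (simp add: card_mono)
      show ?thesis unfolding sz SAfG_def
        using nK K1 c1 le DD_K1(2,3)[OF t i nK K1] by simp
    next
      case nK1: False
      show ?thesis
      proof (cases "p i = Suc i")
        case K2: True
        have sub: "DD n p i \<subseteq> DD n p (Suc i)" using DD_par_sub[of n p i] K2 by simp
        have bin: "Suc i \<in> DD n p (Suc i) - DD n p i"
          using DD_self[OF bi] DD_par_not[OF t ai] K2 by simp
        have ain: "i \<in> DD n p i" using DD_self[OF ai] .
        have le: "card (DD n p i) < card (DD n p (Suc i))"
        proof -
          have "DD n p i \<subset> DD n p (Suc i)" using sub bin by blast
          then show ?thesis by (rule psubset_card_mono[OF DD_fin])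
        qed
        have "card (insert i (DD n p (Suc i) - DD n p i - {Suc i})) = Suc (card (DD n p (Suc i) - DD n p i - {Suc i}))"
          using ain by (simp add: card_insert_if)
        also have "\<dots> = card (DD n p (Suc i) - DD n p i)"
        proof -
          have "DD n p (Suc i) - DD n p i \<noteq> {}" using bin by blast
          then have "0 < card (DD n p (Suc i) - DD n p i)" by (simp add: card_gt_0_iff)
          then show ?thesis using bin by (simp add: card_Diff_singleton)
        qed
        also have "\<dots> = card (DD n p (Suc i)) - card (DD n p i)" using sub by (simp add: card_Diff_subset)
        finally have c1: "card (DD n (sigma i p) i) = card (DD n p (Suc i)) - card (DD n p i)"
          using DD_K2(1)[OF t i nK nK1 K2] by simp
        have bn: "Suc i \<notin> DD n p i - {i}" using DD_par_not[OF t ai] K2 by simp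
        have "card (insert (Suc i) (DD n p i - {i})) = Suc (card (DD n p i - {i}))" using bn by simp
        also have "\<dots> = card (DD n p i)" using ain by (simp add: card_Diff_singleton DD_card_pos)
        finally have c2: "card (DD n (sigma i p) (Suc i)) = card (DD n p i)"
          using DD_K2(2)[OF t i nK nK1 K2] by simp
        show ?thesis unfolding sz SAfG_def
          using nK nK1 K2 c1 c2 le DD_K2(3)[OF t i nK nK1 K2] by simp
      next
        case nK2: False
        have ain: "i \<in> DD n p i" using DD_self[OF ai] .
        have c1: "card (DD n (sigma i p) i) = card (DD n p i) + card (DD n p (Suc i))"
          using DD_K3(1,2)[OF t i nK nK1 nK2] by (simp add: card_Un_disjoint)
        have "card (insert (Suc i) (DD n p i - {i})) = Suc (card (DD n p i - {i}))"
          using DD_K3(4)[OF t i nK nK1 nK2] by simp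
        also have "\<dots> = card (DD n p i)" using ain by (simp add: card_Diff_singleton DD_card_pos)
        finally have c2: "card (DD n (sigma i p) (Suc i)) = card (DD n p i)"
          using DD_K3(3)[OF t i nK nK1 nK2] by simp
        show ?thesis unfolding sz SAfG_def
          using nK nK1 nK2 c1 c2 DD_K3(5)[OF t i nK nK1 nK2] by simp
      qed
    qed
  qed
qed

datatype V = Z | A | B | C | O1 | O2 | O3 | O4

definition T1 :: "'a \<Rightarrow> 'a \<Rightarrow> 'a \<Rightarrow> 'a \<Rightarrow> 'a \<times> 'a \<times> 'a \<Rightarrow> 'a \<times> 'a \<times> 'a" where
  "T1 z a b c t = (case t of (u,w,y) \<Rightarrow> (VaG z a b u w, VbG z a b u w, GenG z a b u w y))"
definition T2 :: "'a \<Rightarrow> 'a \<Rightarrow> 'a \<Rightarrow> 'a \<Rightarrow> 'a \<times> 'a \<times> 'a \<Rightarrow> 'a \<times> 'a \<times> 'a" where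
  "T2 z a b c t = (case t of (u,w,y) \<Rightarrow> (GenG z b c w y u, VaG z b c w y, VbG z b c w y))"
definition H1 :: "'a \<Rightarrow> 'a \<Rightarrow> 'a \<Rightarrow> 'a \<Rightarrow> 'a \<times> 'a \<times> 'a \<Rightarrow> 'a \<Rightarrow> 'a" where
  "H1 z a b c t v = (case t of (u,w,y) \<Rightarrow> GenG z a b u w v)"
definition H2 :: "'a \<Rightarrow> 'a \<Rightarrow> 'a \<Rightarrow> 'a \<Rightarrow> 'a \<times> 'a \<times> 'a \<Rightarrow> 'a \<Rightarrow> 'a" where
  "H2 z a b c t v = (case t of (u,w,y) \<Rightarrow> GenG z b c w y v)"

definition okV :: "'a \<Rightarrow> 'a \<Rightarrow> 'a \<Rightarrow> 'a \<Rightarrow> 'a \<times> 'a \<times> 'a \<Rightarrow> bool" where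
  "okV z a b c t = (case t of (u,w,y) \<Rightarrow>
    u \<noteq> a \<and> w \<noteq> b \<and> y \<noteq> c \<and> \<not> (u = b \<and> w = a) \<and> \<not> (w = c \<and> y = b) \<and> \<not> (u = c \<and> y = a)
  \<and> \<not> (u = b \<and> w = c \<and> y = a) \<and> \<not> (u = c \<and> y = b \<and> w = a)
  \<and> \<not> (u = z \<and> w = z) \<and> \<not> (u = z \<and> y = z) \<and> \<not> (w = z \<and> y = z))"

lemma BV: "\<forall>u\<in>{Z,B,C,O1}. \<forall>w\<in>{Z,A,C,O1,O2}. \<forall>y\<in>{Z,A,B,O1,O2,O3}. okV Z A B C (u,w,y) \<longrightarrow>
   T1 Z A B C (T2 Z A B C (T1 Z A B C (u,w,y))) = T2 Z A B C (T1 Z A B C (T2 Z A B C (u,w,y)))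
 \<and> (\<forall>v\<in>{A,B,C}. H1 Z A B C (T2 Z A B C (T1 Z A B C (u,w,y))) (H2 Z A B C (T1 Z A B C (u,w,y)) (H1 Z A B C (u,w,y) v))
     = H2 Z A B C (T1 Z A B C (T2 Z A B C (u,w,y))) (H1 Z A B C (T2 Z A B C (u,w,y)) (H2 Z A B C (u,w,y) v)))"
  by code_simp

definition enc :: "nat \<Rightarrow> nat \<Rightarrow> nat \<Rightarrow> nat \<Rightarrow> nat \<Rightarrow> nat \<Rightarrow> nat \<Rightarrow> V" where
  "enc a b c k1 k2 k3 v = (if v = 0 then Z else if v = a then A else if v = b then B else if v = c then C
     else if v = k1 then O1 else if v = k2 then O2 else if v = k3 then O3 else O4)"

definition dec :: "nat \<Rightarrow> nat \<Rightarrow> nat \<Rightarrow> nat \<Rightarrow> nat \<Rightarrow> nat \<Rightarrow> V \<Rightarrow> nat" where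
  "dec a b c k1 k2 k3 v = (case v of Z \<Rightarrow> 0 | A \<Rightarrow> a | B \<Rightarrow> b | C \<Rightarrow> c | O1 \<Rightarrow> k1 | O2 \<Rightarrow> k2 | O3 \<Rightarrow> k3 | O4 \<Rightarrow> 0)"

lemma dec_enc: "v \<in> {0,a,b,c,k1,k2,k3} \<Longrightarrow> dec a b c k1 k2 k3 (enc a b c k1 k2 k3 v) = v"
  unfolding enc_def dec_def by (elim insertE emptyE; simp)

lemma inj_enc: "inj_on (enc a b c k1 k2 k3) {0,a,b,c,k1,k2,k3}"
  by (rule inj_on_inverseI[where g="dec a b c k1 k2 k3"]) (rule dec_enc)

definition enc3 :: "('a \<Rightarrow> 'b) \<Rightarrow> 'a \<times> 'a \<times> 'a \<Rightarrow> 'b \<times> 'b \<times> 'b" where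
  "enc3 f t = (case t of (u,w,y) \<Rightarrow> (f u, f w, f y))"
definition in3 :: "'a set \<Rightarrow> 'a \<times> 'a \<times> 'a \<Rightarrow> bool" where
  "in3 S t = (case t of (u,w,y) \<Rightarrow> u \<in> S \<and> w \<in> S \<and> y \<in> S)"

lemma enc_T1: "inj_on f S \<Longrightarrow> z\<in>S \<Longrightarrow> a\<in>S \<Longrightarrow> b\<in>S \<Longrightarrow> c\<in>S \<Longrightarrow> in3 S t \<Longrightarrow>
  enc3 f (T1 z a b c t) = T1 (f z) (f a) (f b) (f c) (enc3 f t)"
  by (cases t) (simp add: T1_def enc3_def in3_def enc_VaG enc_VbG enc_GenG)
lemma enc_T2: "inj_on f S \<Longrightarrow> z\<in>S \<Longrightarrow> a\<in>S \<Longrightarrow> b\<in>S \<Longrightarrow> c\<in>S \<Longrightarrow> in3 S t \<Longrightarrow>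
  enc3 f (T2 z a b c t) = T2 (f z) (f a) (f b) (f c) (enc3 f t)"
  by (cases t) (simp add: T2_def enc3_def in3_def enc_VaG enc_VbG enc_GenG)
lemma enc_H1: "inj_on f S \<Longrightarrow> z\<in>S \<Longrightarrow> a\<in>S \<Longrightarrow> b\<in>S \<Longrightarrow> c\<in>S \<Longrightarrow> in3 S t \<Longrightarrow> v \<in> S \<Longrightarrow>
  f (H1 z a b c t v) = H1 (f z) (f a) (f b) (f c) (enc3 f t) (f v)"
  by (cases t) (simp add: H1_def enc3_def in3_def enc_VaG enc_VbG enc_GenG)
lemma enc_H2: "inj_on f S \<Longrightarrow> z\<in>S \<Longrightarrow> a\<in>S \<Longrightarrow> b\<in>S \<Longrightarrow> c\<in>S \<Longrightarrow> in3 S t \<Longrightarrow> v \<in> S \<Longrightarrow>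
  f (H2 z a b c t v) = H2 (f z) (f a) (f b) (f c) (enc3 f t) (f v)"
  by (cases t) (simp add: H2_def enc3_def in3_def enc_VaG enc_VbG enc_GenG)
lemma in3_T1: "a\<in>S \<Longrightarrow> b\<in>S \<Longrightarrow> c\<in>S \<Longrightarrow> in3 S t \<Longrightarrow> in3 S (T1 z a b c t)"
  by (cases t) (simp add: T1_def in3_def mem_VaG mem_VbG mem_GenG)
lemma in3_T2: "a\<in>S \<Longrightarrow> b\<in>S \<Longrightarrow> c\<in>S \<Longrightarrow> in3 S t \<Longrightarrow> in3 S (T2 z a b c t)"
  by (cases t) (simp add: T2_def in3_def mem_VaG mem_VbG mem_GenG)
lemma in_H1: "a\<in>S \<Longrightarrow> b\<in>S \<Longrightarrow> v \<in> S \<Longrightarrow> H1 z a b c t v \<in> S"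
  by (cases t) (simp add: H1_def mem_GenG)
lemma in_H2: "b\<in>S \<Longrightarrow> c\<in>S \<Longrightarrow> v \<in> S \<Longrightarrow> H2 z a b c t v \<in> S"
  by (cases t) (simp add: H2_def mem_GenG)
lemma enc3_inj: "inj_on f S \<Longrightarrow> in3 S t \<Longrightarrow> in3 S t' \<Longrightarrow> enc3 f t = enc3 f t' \<Longrightarrow> t = t'"
  by (cases t; cases t') (auto simp: enc3_def in3_def inj_on_eq)
lemma enc_okV: "inj_on f S \<Longrightarrow> z\<in>S \<Longrightarrow> a\<in>S \<Longrightarrow> b\<in>S \<Longrightarrow> c\<in>S \<Longrightarrow> in3 S t \<Longrightarrow>
  okV (f z) (f a) (f b) (f c) (enc3 f t) = okV z a b c t"
  by (cases t) (simp add: okV_def enc3_def in3_def inj_on_eq)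

lemma BN:
  fixes a b c :: nat
  assumes d: "distinct [0,a,b,c]" and ok: "okV 0 a b c (u,w,y)"
  shows "T1 0 a b c (T2 0 a b c (T1 0 a b c (u,w,y))) = T2 0 a b c (T1 0 a b c (T2 0 a b c (u,w,y)))
   \<and> (\<forall>v\<in>{a,b,c}. H1 0 a b c (T2 0 a b c (T1 0 a b c (u,w,y))) (H2 0 a b c (T1 0 a b c (u,w,y)) (H1 0 a b c (u,w,y) v))
     = H2 0 a b c (T1 0 a b c (T2 0 a b c (u,w,y))) (H1 0 a b c (T2 0 a b c (u,w,y)) (H2 0 a b c (u,w,y) v)))"
proof -
  define S where "S = {0,a,b,c,u,w,y}"
  define f where "f = enc a b c u w y"
  have inj: "inj_on f S" using inj_enc unfolding S_def f_def .
  have f0: "f 0 = Z" "f a = A" "f b = B" "f c = C" using d by (auto simp: enc_def f_def)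
  have t: "in3 S (u,w,y)" by (simp add: in3_def S_def)
  have e: "enc3 f (u,w,y) = (f u, f w, f y)" by (simp add: enc3_def)
  have m: "0 \<in> S" "a \<in> S" "b \<in> S" "c \<in> S" by (auto simp: S_def)
  have okf: "okV Z A B C (f u, f w, f y)"
    using enc_okV[OF inj m t] ok f0 e by simp
  have ranges: "f u \<in> {Z,B,C,O1}" "f w \<in> {Z,A,C,O1,O2}" "f y \<in> {Z,A,B,O1,O2,O3}"
    using okf by (auto simp: enc_def okV_def f_def split: if_splits)
  note BVi = BV[rule_format, OF ranges okf]
  note pushes = enc_T1[OF inj m] enc_T2[OF inj m] enc_H1[OF inj m] enc_H2[OF inj m]
    in3_T1[OF m(2-4)] in3_T2[OF m(2-4)] in_H1[OF m(2-3)] in_H2[OF m(3-4)]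
  have 1: "T1 0 a b c (T2 0 a b c (T1 0 a b c (u,w,y))) = T2 0 a b c (T1 0 a b c (T2 0 a b c (u,w,y)))"
    apply (rule enc3_inj[OF inj])
    using BVi t by (simp_all only: pushes f0 e)
  have 2: "H1 0 a b c (T2 0 a b c (T1 0 a b c (u,w,y))) (H2 0 a b c (T1 0 a b c (u,w,y)) (H1 0 a b c (u,w,y) v))
     = H2 0 a b c (T1 0 a b c (T2 0 a b c (u,w,y))) (H1 0 a b c (T2 0 a b c (u,w,y)) (H2 0 a b c (u,w,y) v))"
    if v: "v \<in> {a,b,c}" for v
  proof -
    have vS: "v \<in> S" using v by (auto simp: S_def)
    have fv: "f v \<in> {A,B,C}" using v f0 by auto
    show ?thesis
      apply (rule inj_onD[OF inj])
      using BVi t vS fv by (simp_all only: pushes f0 e simp_thms)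
  qed
  show ?thesis using 1 2 by blast
qed

definition cB :: "'a \<Rightarrow> 'a \<Rightarrow> 'a \<Rightarrow> 'a \<Rightarrow> 'a \<times> 'a \<times> 'a \<Rightarrow> bool" where
  "cB z a b c t = (fst (snd t) = z \<and> fst t = b)"
definition cC :: "'a \<Rightarrow> 'a \<Rightarrow> 'a \<Rightarrow> 'a \<Rightarrow> 'a \<times> 'a \<times> 'a \<Rightarrow> bool" where
  "cC z a b c t = (snd (snd t) = z \<and> fst (snd t) = c)"

definition WLf :: "'a \<Rightarrow> 'a \<Rightarrow> 'a \<Rightarrow> 'a \<Rightarrow> 'a \<times> 'a \<times> 'a \<Rightarrow> int \<Rightarrow> int \<Rightarrow> int" where
  "WLf z a b c t x y = (if cB z a b c t then x else 0) + (if cC z a b c (T1 z a b c t) then x else 0)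
     + (if cB z a b c (T2 z a b c (T1 z a b c t)) then SAfG z a b (fst t) (fst (snd t)) x y else 0)"
definition WRf :: "'a \<Rightarrow> 'a \<Rightarrow> 'a \<Rightarrow> 'a \<Rightarrow> 'a \<times> 'a \<times> 'a \<Rightarrow> int \<Rightarrow> int \<Rightarrow> int" where
  "WRf z a b c t x y = (if cC z a b c t then y else 0) + (if cB z a b c (T2 z a b c t) then x else 0)
     + (if cC z a b c (T1 z a b c (T2 z a b c t)) then x else 0)"

lemma WV: "\<forall>u\<in>{Z,B,C,O1}. \<forall>w\<in>{Z,A,C,O1,O2}. \<forall>y\<in>{Z,A,B,O1,O2,O3}. okV Z A B C (u,w,y) \<longrightarrow>
   WLf Z A B C (u,w,y) 1 0 = WRf Z A B C (u,w,y) 1 0 \<and> WLf Z A B C (u,w,y) 0 1 = WRf Z A B C (u,w,y) 0 1"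
  by code_simp

lemma WLf_lin: "WLf z a b c t x y = x * WLf z a b c t 1 0 + y * WLf z a b c t 0 1"
  unfolding WLf_def SAfG_def by (simp add: algebra_simps)
lemma WRf_lin: "WRf z a b c t x y = x * WRf z a b c t 1 0 + y * WRf z a b c t 0 1"
  unfolding WRf_def by (simp add: algebra_simps)

lemma in3_fst: "in3 S t \<Longrightarrow> fst t \<in> S \<and> fst (snd t) \<in> S \<and> snd (snd t) \<in> S"
  by (cases t) (simp add: in3_def)
lemma enc3_comp: "fst (enc3 f t) = f (fst t)" "fst (snd (enc3 f t)) = f (fst (snd t))" "snd (snd (enc3 f t)) = f (snd (snd t))"
  by (cases t; simp add: enc3_def)+

lemma enc_cB: "inj_on f S \<Longrightarrow> z\<in>S \<Longrightarrow> a\<in>S \<Longrightarrow> b\<in>S \<Longrightarrow> c\<in>S \<Longrightarrow> in3 S t \<Longrightarrow>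
  cB (f z) (f a) (f b) (f c) (enc3 f t) = cB z a b c t"
  unfolding cB_def enc3_comp by (simp add: inj_on_eq in3_fst)
lemma enc_cC: "inj_on f S \<Longrightarrow> z\<in>S \<Longrightarrow> a\<in>S \<Longrightarrow> b\<in>S \<Longrightarrow> c\<in>S \<Longrightarrow> in3 S t \<Longrightarrow>
  cC (f z) (f a) (f b) (f c) (enc3 f t) = cC z a b c t"
  unfolding cC_def enc3_comp by (simp add: inj_on_eq in3_fst)
lemma enc_SAfG: "inj_on f S \<Longrightarrow> z\<in>S \<Longrightarrow> a\<in>S \<Longrightarrow> b\<in>S \<Longrightarrow> u\<in>S \<Longrightarrow> w\<in>S \<Longrightarrow>
  SAfG (f z) (f a) (f b) (f u) (f w) x y = SAfG z a b u w x y"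
  unfolding SAfG_def by (simp add: enc_KKG inj_on_eq)

lemma enc_WLf:
  assumes inj: "inj_on f S" and m: "z\<in>S" "a\<in>S" "b\<in>S" "c\<in>S" and t: "in3 S t"
  shows "WLf (f z) (f a) (f b) (f c) (enc3 f t) x y = WLf z a b c t x y"
proof -
  have t1: "in3 S (T1 z a b c t)" using in3_T1[OF m(2-4) t] .
  have t21: "in3 S (T2 z a b c (T1 z a b c t))" using in3_T2[OF m(2-4) t1] .
  have e1: "T1 (f z) (f a) (f b) (f c) (enc3 f t) = enc3 f (T1 z a b c t)" using enc_T1[OF inj m t] by simp
  have e2: "T2 (f z) (f a) (f b) (f c) (enc3 f (T1 z a b c t)) = enc3 f (T2 z a b c (T1 z a b c t))"
    using enc_T2[OF inj m t1] by simp
  show ?thesis unfolding WLf_def e1 e2 enc3_comp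
    using enc_cB[OF inj m t] enc_cC[OF inj m t1] enc_cB[OF inj m t21]
      enc_SAfG[OF inj m(1-3) conjunct1[OF in3_fst[OF t]] conjunct1[OF conjunct2[OF in3_fst[OF t]]], of x y]
    by simp
qed

lemma enc_WRf:
  assumes inj: "inj_on f S" and m: "z\<in>S" "a\<in>S" "b\<in>S" "c\<in>S" and t: "in3 S t"
  shows "WRf (f z) (f a) (f b) (f c) (enc3 f t) x y = WRf z a b c t x y"
proof -
  have t2: "in3 S (T2 z a b c t)" using in3_T2[OF m(2-4) t] .
  have t12: "in3 S (T1 z a b c (T2 z a b c t))" using in3_T1[OF m(2-4) t2] .
  have e1: "T2 (f z) (f a) (f b) (f c) (enc3 f t) = enc3 f (T2 z a b c t)" using enc_T2[OF inj m t] by simp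
  have e2: "T1 (f z) (f a) (f b) (f c) (enc3 f (T2 z a b c t)) = enc3 f (T1 z a b c (T2 z a b c t))"
    using enc_T1[OF inj m t2] by simp
  show ?thesis unfolding WRf_def e1 e2
    using enc_cC[OF inj m t] enc_cB[OF inj m t2] enc_cC[OF inj m t12]
    by simp
qed

lemma WN:
  fixes a b c :: nat
  assumes d: "distinct [0,a,b,c]" and ok: "okV 0 a b c (u,w,y)"
  shows "WLf 0 a b c (u,w,y) x1 x2 = WRf 0 a b c (u,w,y) x1 x2"
proof -
  define S where "S = {0,a,b,c,u,w,y}"
  define f where "f = enc a b c u w y"
  have inj: "inj_on f S" using inj_enc unfolding S_def f_def .
  have f0: "f 0 = Z" "f a = A" "f b = B" "f c = C" using d by (auto simp: enc_def f_def)
  have t: "in3 S (u,w,y)" by (simp add: in3_def S_def)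
  have e: "enc3 f (u,w,y) = (f u, f w, f y)" by (simp add: enc3_def)
  have m: "0 \<in> S" "a \<in> S" "b \<in> S" "c \<in> S" by (auto simp: S_def)
  have okf: "okV Z A B C (f u, f w, f y)"
    using enc_okV[OF inj m t] ok f0 e by simp
  have ranges: "f u \<in> {Z,B,C,O1}" "f w \<in> {Z,A,C,O1,O2}" "f y \<in> {Z,A,B,O1,O2,O3}"
    using okf by (auto simp: enc_def okV_def f_def split: if_splits)
  note WVi = WV[rule_format, OF ranges okf]
  have L: "WLf 0 a b c (u,w,y) x y' = WLf Z A B C (f u, f w, f y) x y'" for x y'
    using enc_WLf[OF inj m t, of x y'] f0 e by simp
  have R: "WRf 0 a b c (u,w,y) x y' = WRf Z A B C (f u, f w, f y) x y'" for x y'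
    using enc_WRf[OF inj m t, of x y'] f0 e by simp
  show ?thesis
    by (subst WLf_lin, subst WRf_lin) (simp add: L R WVi)
qed

definition tr :: "(nat \<Rightarrow> nat) \<Rightarrow> nat \<Rightarrow> nat \<times> nat \<times> nat" where
  "tr p i = (p i, p (Suc i), p (Suc (Suc i)))"

lemma tr1: "tr (sigma i p) i = T1 0 i (Suc i) (Suc (Suc i)) (tr p i)"
  by (simp add: tr_def T1_def)
lemma tr2: "tr (sigma (Suc i) p) i = T2 0 i (Suc i) (Suc (Suc i)) (tr p i)"
  by (simp add: tr_def T2_def)
lemma gen1: "x \<noteq> i \<Longrightarrow> x \<noteq> Suc i \<Longrightarrow> sigma i p x = H1 0 i (Suc i) (Suc (Suc i)) (tr p i) (p x)"
  by (simp add: tr_def H1_def)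
lemma gen2: "x \<noteq> Suc i \<Longrightarrow> x \<noteq> Suc (Suc i) \<Longrightarrow> sigma (Suc i) p x = H2 0 i (Suc i) (Suc (Suc i)) (tr p i) (p x)"
  by (simp add: tr_def H2_def)

lemma H1_fix: "v \<noteq> a \<Longrightarrow> v \<noteq> b \<Longrightarrow> H1 z a b c t v = v"
  by (cases t) (simp add: H1_def GenG_fix)
lemma H2_fix: "v \<noteq> b \<Longrightarrow> v \<noteq> c \<Longrightarrow> H2 z a b c t v = v"
  by (cases t) (simp add: H2_def GenG_fix)

lemma braid_tree:
  assumes i: "1 \<le> i" and ok: "okV 0 i (Suc i) (Suc (Suc i)) (tr p i)"
  shows "sigma i (sigma (Suc i) (sigma i p)) = sigma (Suc i) (sigma i (sigma (Suc i) p))"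
proof
  fix x
  define a where "a = i"
  define b where "b = Suc i"
  define c where "c = Suc (Suc i)"
  define t where "t = tr p i"
  obtain u w y where tt: "t = (u,w,y)" by (cases t)
  have d: "distinct [0,a,b,c]" using i by (simp add: a_def b_def c_def)
  note BNi = BN[OF d, of u w y, folded tt]
  have okt: "okV 0 a b c (u,w,y)" using ok tt by (simp add: t_def a_def b_def c_def)
  note BNi = BN[OF d okt, folded tt]
  have L: "tr (sigma i (sigma (Suc i) (sigma i p))) i = T1 0 a b c (T2 0 a b c (T1 0 a b c t))"
    by (simp add: tr1 tr2 a_def b_def c_def t_def)
  have R: "tr (sigma (Suc i) (sigma i (sigma (Suc i) p))) i = T2 0 a b c (T1 0 a b c (T2 0 a b c t))"
    by (simp add: tr1 tr2 a_def b_def c_def t_def)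
  have trE: "tr (sigma i (sigma (Suc i) (sigma i p))) i = tr (sigma (Suc i) (sigma i (sigma (Suc i) p))) i"
    using L R BNi by simp
  show "sigma i (sigma (Suc i) (sigma i p)) x = sigma (Suc i) (sigma i (sigma (Suc i) p)) x"
  proof (cases "x = i \<or> x = Suc i \<or> x = Suc (Suc i)")
    case True
    then show ?thesis using trE unfolding tr_def by auto
  next
    case False
    then have x: "x \<noteq> a" "x \<noteq> b" "x \<noteq> c" by (auto simp: a_def b_def c_def)
    have LL: "sigma i (sigma (Suc i) (sigma i p)) x = H1 0 a b c (T2 0 a b c (T1 0 a b c t)) (H2 0 a b c (T1 0 a b c t) (H1 0 a b c t (p x)))"
      using x by (simp del: sig_gen sig_a sig_b add: gen1[of _ i] gen2[of _ i] tr1 tr2 a_def b_def c_def t_def)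
    have RR: "sigma (Suc i) (sigma i (sigma (Suc i) p)) x = H2 0 a b c (T1 0 a b c (T2 0 a b c t)) (H1 0 a b c (T2 0 a b c t) (H2 0 a b c t (p x)))"
      using x by (simp del: sig_gen sig_a sig_b add: gen1[of _ i] gen2[of _ i] tr1 tr2 a_def b_def c_def t_def)
    show ?thesis
    proof (cases "p x \<in> {a,b,c}")
      case True
      then show ?thesis using LL RR BNi by simp
    next
      case False
      then show ?thesis using LL RR by (simp add: H1_fix H2_fix)
    qed
  qed
qed

lemma rw_root:
  assumes t: "is_tree n q" and x: "x \<in> {1..n}" and y: "y \<in> {1..n}" and xy: "x \<noteq> y" and qy: "q y = 0"
  shows "red_weight n q x = (if q x = y then subtree_size n q x else 0)"
proof -
  obtain rk where g: "good n q" and r: "\<exists>!r. r \<in> {1..n} \<and> q r = 0" using tree_parts[OF t] by blast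
  have uq: "\<And>v. v \<in> {1..n} \<Longrightarrow> q v = 0 \<Longrightarrow> v = y"
  proof -
    fix v assume "v \<in> {1..n}" "q v = 0"
    then show "v = y" using r y qy by (metis (no_types, lifting))
  qed
  have qx: "q x \<noteq> 0"
  proof
    assume "q x = 0" then have "x = y" using uq[OF x] by simp
    then show False using xy by simp
  qed
  have qxin: "q x \<in> {1..n}" using good_in[OF g qx] .
  have "q (q x) = 0 \<longleftrightarrow> q x = y"
  proof
    assume "q (q x) = 0" then show "q x = y" using uq[OF qxin] by simp
  next
    assume "q x = y" then show "q (q x) = 0" using qy by simp
  qed
  then show ?thesis unfolding red_weight_def using qx by simp
qed

lemma termB:
  assumes t: "is_tree n q" and i: "1 \<le> i" "Suc i \<le> n"
  shows "(if q (Suc i) = 0 then red_weight n q i else 0) = (if q (Suc i) = 0 \<and> q i = Suc i then subtree_size n q i else 0)"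
proof (cases "q (Suc i) = 0")
  case True
  have "i \<in> {1..n}" "Suc i \<in> {1..n}" "i \<noteq> Suc i" using i by auto
  then show ?thesis using rw_root[OF t _ _ _ True] True by simp
next
  case False then show ?thesis by simp
qed

lemma mod_step: "(e::nat) < n \<Longrightarrow> (if P then (e + w) mod n else e) = (e + (if P then w else 0)) mod n"
  by simp

lemma mod_step2: "(0::nat) < n \<Longrightarrow> (if P then ((e + x) mod n + w) mod n else (e + x) mod n) = (e + x + (if P then w else 0)) mod n"
  by (cases P) (simp_all add: mod_add_left_eq)

lemma cB_tr: "cB 0 i (Suc i) (Suc (Suc i)) (tr q i) = (q (Suc i) = 0 \<and> q i = Suc i)"
  by (simp add: cB_def tr_def)
lemma cC_tr: "cC 0 i (Suc i) (Suc (Suc i)) (tr q i) = (q (Suc (Suc i)) = 0 \<and> q (Suc i) = Suc (Suc i))"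
  by (simp add: cC_def tr_def)

lemma sa_eq: "sigma_aug n i (p, e) = (sigma i p, if p (Suc i) = 0 then (e + red_weight n p i) mod n else e)"
  by (simp add: sigma_aug_def)

lemma okV_tree:
  assumes t: "is_tree n p" and i: "1 \<le> i" "Suc (Suc i) \<le> n"
  shows "okV 0 i (Suc i) (Suc (Suc i)) (tr p i)"
proof -
  have a: "i \<in> {1..n}" and b: "Suc i \<in> {1..n}" and c: "Suc (Suc i) \<in> {1..n}" using i by auto
  have ne: "i \<noteq> Suc i" "Suc i \<noteq> Suc (Suc i)" "i \<noteq> Suc (Suc i)" by simp_all
  note f1 = tree_facts[OF t a b c] and f2 = tree_facts[OF t b c a] and f3 = tree_facts[OF t c a b]
  note f4 = tree_facts[OF t a c b]
  show ?thesis unfolding okV_def tr_def prod.case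
    using f1(1) f2(1) f3(1) f1(3) f2(3) f4(3) f1(4) f4(4) f1(2)[OF ne(1)] f4(2)[OF ne(3)] f2(2)[OF ne(2)]
    by (intro conjI) assumption+
qed

lemma braid_aug:
  assumes t: "is_tree n p" and e: "e < n" and i: "1 \<le> i" "Suc (Suc i) \<le> n"
  shows "sigma_aug n i (sigma_aug n (Suc i) (sigma_aug n i (p, e))) =
         sigma_aug n (Suc i) (sigma_aug n i (sigma_aug n (Suc i) (p, e)))"
proof -
  have i1: "1 \<le> i" "Suc i \<le> n" and i2: "1 \<le> Suc i" "Suc (Suc i) \<le> n" using i by auto
  define p1 where "p1 = sigma i p"
  define p2 where "p2 = sigma (Suc i) p1"
  define q1 where "q1 = sigma (Suc i) p"
  define q2 where "q2 = sigma i q1"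
  have t1: "is_tree n p1" unfolding p1_def using sigma_tree[OF t i1] .
  have t2: "is_tree n p2" unfolding p2_def using sigma_tree[OF t1 i2] .
  have u1: "is_tree n q1" unfolding q1_def using sigma_tree[OF t i2] .
  have u2: "is_tree n q2" unfolding q2_def using sigma_tree[OF u1 i1] .
  have n0: "0 < n" using e by simp
  have tree_eq: "sigma i p2 = sigma (Suc i) q2"
    unfolding p2_def p1_def q2_def q1_def using braid_tree[OF i(1) okV_tree[OF t i]] .
  define w1 where "w1 = (if p (Suc i) = 0 then red_weight n p i else 0)"
  define w2 where "w2 = (if p1 (Suc (Suc i)) = 0 then red_weight n p1 (Suc i) else 0)"
  define w3 where "w3 = (if p2 (Suc i) = 0 then red_weight n p2 i else 0)"
  define v1 where "v1 = (if p (Suc (Suc i)) = 0 then red_weight n p (Suc i) else 0)"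
  define v2 where "v2 = (if q1 (Suc i) = 0 then red_weight n q1 i else 0)"
  define v3 where "v3 = (if q2 (Suc (Suc i)) = 0 then red_weight n q2 (Suc i) else 0)"
  have L: "sigma_aug n i (sigma_aug n (Suc i) (sigma_aug n i (p, e))) = (sigma i p2, (e + w1 + w2 + w3) mod n)"
    unfolding sa_eq p1_def[symmetric] p2_def[symmetric]
    by (simp only: mod_step[OF e] mod_step2[OF n0] w1_def[symmetric] w2_def[symmetric] w3_def[symmetric])
  have R: "sigma_aug n (Suc i) (sigma_aug n i (sigma_aug n (Suc i) (p, e))) = (sigma (Suc i) q2, (e + v1 + v2 + v3) mod n)"
    unfolding sa_eq q1_def[symmetric] q2_def[symmetric]
    by (simp only: mod_step[OF e] mod_step2[OF n0] v1_def[symmetric] v2_def[symmetric] v3_def[symmetric])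
  define A where "A = subtree_size n p i"
  define B where "B = subtree_size n p (Suc i)"
  have sA1: "int (subtree_size n p1 (Suc i)) = int A" using size_sig[OF t i1, of "Suc i"] by (simp add: p1_def A_def)
  have sA2: "int (subtree_size n p2 i) = SAfG 0 i (Suc i) (p i) (p (Suc i)) (int A) (int B)"
    using size_sig[OF t1 i2, of i] size_sig[OF t i1, of i] by (simp add: p2_def p1_def A_def B_def)
  have sB3: "int (subtree_size n q1 i) = int A" using size_sig[OF t i2, of i] by (simp add: q1_def A_def)
  have sB4: "int (subtree_size n q2 (Suc i)) = int A" using size_sig[OF u1 i1, of "Suc i"] sB3 by (simp add: q2_def)
  have WL: "int (w1 + w2 + w3) = WLf 0 i (Suc i) (Suc (Suc i)) (tr p i) (int A) (int B)"
  proof -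
    have "WLf 0 i (Suc i) (Suc (Suc i)) (tr p i) (int A) (int B) =
      (if cB 0 i (Suc i) (Suc (Suc i)) (tr p i) then int A else 0) + (if cC 0 i (Suc i) (Suc (Suc i)) (tr p1 i) then int A else 0)
     + (if cB 0 i (Suc i) (Suc (Suc i)) (tr p2 i) then SAfG 0 i (Suc i) (p i) (p (Suc i)) (int A) (int B) else 0)"
      unfolding WLf_def p2_def p1_def tr2 tr1 by (simp add: tr_def)
    moreover have "int w1 = (if cB 0 i (Suc i) (Suc (Suc i)) (tr p i) then int A else 0)"
      unfolding w1_def termB[OF t i1] cB_tr A_def by simp
    moreover have "int w2 = (if cC 0 i (Suc i) (Suc (Suc i)) (tr p1 i) then int A else 0)"
      unfolding w2_def termB[OF t1 i2] cC_tr using sA1 by simp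
    moreover have "int w3 = (if cB 0 i (Suc i) (Suc (Suc i)) (tr p2 i) then SAfG 0 i (Suc i) (p i) (p (Suc i)) (int A) (int B) else 0)"
      unfolding w3_def termB[OF t2 i1] cB_tr using sA2 by simp
    ultimately show ?thesis by simp
  qed
  have WR: "int (v1 + v2 + v3) = WRf 0 i (Suc i) (Suc (Suc i)) (tr p i) (int A) (int B)"
  proof -
    have "WRf 0 i (Suc i) (Suc (Suc i)) (tr p i) (int A) (int B) =
      (if cC 0 i (Suc i) (Suc (Suc i)) (tr p i) then int B else 0) + (if cB 0 i (Suc i) (Suc (Suc i)) (tr q1 i) then int A else 0)
     + (if cC 0 i (Suc i) (Suc (Suc i)) (tr q2 i) then int A else 0)"
      unfolding WRf_def q2_def q1_def tr2 tr1 by simp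
    moreover have "int v1 = (if cC 0 i (Suc i) (Suc (Suc i)) (tr p i) then int B else 0)"
      unfolding v1_def termB[OF t i2] cC_tr B_def by simp
    moreover have "int v2 = (if cB 0 i (Suc i) (Suc (Suc i)) (tr q1 i) then int A else 0)"
      unfolding v2_def termB[OF u1 i1] cB_tr using sB3 by simp
    moreover have "int v3 = (if cC 0 i (Suc i) (Suc (Suc i)) (tr q2 i) then int A else 0)"
      unfolding v3_def termB[OF u2 i2] cC_tr using sB4 by simp
    ultimately show ?thesis by simp
  qed
  obtain u w y where tt: "tr p i = (u,w,y)" by (cases "tr p i")
  have d: "distinct [0, i, Suc i, Suc (Suc i)]" using i by simp
  have "WLf 0 i (Suc i) (Suc (Suc i)) (tr p i) (int A) (int B) = WRf 0 i (Suc i) (Suc (Suc i)) (tr p i) (int A) (int B)"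
    using WN[OF d, of u w y] okV_tree[OF t i] tt by simp
  then have "w1 + w2 + w3 = v1 + v2 + v3" using WL WR by simp
  then show ?thesis using L R tree_eq by (simp add: add.assoc)
qed

lemma inv_KKG: "inj f \<Longrightarrow> f z = z \<Longrightarrow> f a = a \<Longrightarrow> f b = b \<Longrightarrow> KKG z a b (f u) (f w) = KKG z a b u w"
  using enc_KKG[of f UNIV z a b u w] by simp
lemma inv_VaG: "inj f \<Longrightarrow> f z = z \<Longrightarrow> f a = a \<Longrightarrow> f b = b \<Longrightarrow> VaG z a b (f u) (f w) = f (VaG z a b u w)"
  using enc_VaG[of f UNIV z a b u w] by simp
lemma inv_VbG: "inj f \<Longrightarrow> f z = z \<Longrightarrow> f a = a \<Longrightarrow> f b = b \<Longrightarrow> VbG z a b (f u) (f w) = f (VbG z a b u w)"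
  using enc_VbG[of f UNIV z a b u w] by simp
lemma inv_GenG: "inj f \<Longrightarrow> f z = z \<Longrightarrow> f a = a \<Longrightarrow> f b = b \<Longrightarrow> GenG z a b (f u) (f w) v = GenG z a b u w v"
proof -
  assume f: "inj f" "f z = z" "f a = a" "f b = b"
  have "f w = a \<longleftrightarrow> w = a" using f by (metis injD)
  then show ?thesis unfolding GenG_def using inv_KKG[OF f] by simp
qed
lemma GenG_injf: "inj (GenG z a b u w)" by (rule injI) (rule GenG_inj)
lemma swpG_comm: "a \<noteq> c \<Longrightarrow> a \<noteq> d \<Longrightarrow> b \<noteq> c \<Longrightarrow> b \<noteq> d \<Longrightarrow> swpG a b (swpG c d v) = swpG c d (swpG a b v)"
  unfolding swpG_def by auto
lemma GenG_comm: "a \<noteq> c \<Longrightarrow> a \<noteq> d \<Longrightarrow> b \<noteq> c \<Longrightarrow> b \<noteq> d \<Longrightarrow>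
  GenG z a b u w (GenG z c d u' w' v) = GenG z c d u' w' (GenG z a b u w v)"
  unfolding GenG_def using swpG_comm by auto

lemma sig_comm:
  assumes i: "1 \<le> i" and ij: "Suc i < j"
  shows "sigma i (sigma j p) = sigma j (sigma i p)"
proof
  fix x
  define gi where "gi = GenG 0 i (Suc i) (p i) (p (Suc i))"
  define gj where "gj = GenG 0 j (Suc j) (p j) (p (Suc j))"
  have ne: "i \<noteq> j" "i \<noteq> Suc j" "Suc i \<noteq> j" "Suc i \<noteq> Suc j" "j \<noteq> 0" "Suc j \<noteq> 0" "i \<noteq> 0" "Suc i \<noteq> 0"
    using i ij by auto
  have igi: "inj gi" and igj: "inj gj" unfolding gi_def gj_def by (rule GenG_injf)+
  have fi: "gi 0 = 0" "gi j = j" "gi (Suc j) = Suc j" unfolding gi_def using ne by (simp_all add: GenG_fix)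
  have fj: "gj 0 = 0" "gj i = i" "gj (Suc i) = Suc i" unfolding gj_def using ne by (simp_all add: GenG_fix)
  have sj: "sigma j p i = gj (p i)" "sigma j p (Suc i) = gj (p (Suc i))" unfolding gj_def using ne by simp_all
  have si: "sigma i p j = gi (p j)" "sigma i p (Suc j) = gi (p (Suc j))" unfolding gi_def using ne by simp_all
  show "sigma i (sigma j p) x = sigma j (sigma i p) x"
  proof (cases "x = i \<or> x = Suc i")
    case True
    have Gj: "GenG 0 j (Suc j) (gi (p j)) (gi (p (Suc j))) v = gj v" for v
      unfolding gj_def by (rule inv_GenG[OF igi fi])
    show ?thesis
    proof (cases "x = i")
      case True
      have "sigma i (sigma j p) x = gj (VaG 0 i (Suc i) (p i) (p (Suc i)))"
        using True sj inv_VaG[OF igj fj] by simp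
      moreover have "sigma j (sigma i p) x = gj (VaG 0 i (Suc i) (p i) (p (Suc i)))"
        using True ne si Gj by simp
      ultimately show ?thesis by simp
    next
      case False
      then have x: "x = Suc i" using \<open>x = i \<or> x = Suc i\<close> by simp
      have "sigma i (sigma j p) x = gj (VbG 0 i (Suc i) (p i) (p (Suc i)))"
        using x sj inv_VbG[OF igj fj] by simp
      moreover have "sigma j (sigma i p) x = gj (VbG 0 i (Suc i) (p i) (p (Suc i)))"
        using x ne si Gj by simp
      ultimately show ?thesis by simp
    qed
  next
    case nI: False
    show ?thesis
    proof (cases "x = j \<or> x = Suc j")
      case True
      have Gi: "GenG 0 i (Suc i) (gj (p i)) (gj (p (Suc i))) v = gi v" for v
        unfolding gi_def by (rule inv_GenG[OF igj fj])
      show ?thesis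
      proof (cases "x = j")
        case True
        have "sigma j (sigma i p) x = gi (VaG 0 j (Suc j) (p j) (p (Suc j)))"
          using True si inv_VaG[OF igi fi] by simp
        moreover have "sigma i (sigma j p) x = gi (VaG 0 j (Suc j) (p j) (p (Suc j)))"
          using True ne sj Gi by simp
        ultimately show ?thesis by simp
      next
        case False
        then have x: "x = Suc j" using \<open>x = j \<or> x = Suc j\<close> by simp
        have "sigma j (sigma i p) x = gi (VbG 0 j (Suc j) (p j) (p (Suc j)))"
          using x si inv_VbG[OF igi fi] by simp
        moreover have "sigma i (sigma j p) x = gi (VbG 0 j (Suc j) (p j) (p (Suc j)))"
          using x ne sj Gi by simp
        ultimately show ?thesis by simp
      qed
    next
      case nJ: False
      have Gi: "GenG 0 i (Suc i) (gj (p i)) (gj (p (Suc i))) v = gi v" for v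
        unfolding gi_def by (rule inv_GenG[OF igj fj])
      have Gj: "GenG 0 j (Suc j) (gi (p j)) (gi (p (Suc j))) v = gj v" for v
        unfolding gj_def by (rule inv_GenG[OF igi fi])
      have "sigma i (sigma j p) x = gi (gj (p x))" using nI nJ sj Gi by (simp add: gj_def)
      moreover have "sigma j (sigma i p) x = gj (gi (p x))" using nI nJ si Gj by (simp add: gi_def)
      moreover have "gi (gj (p x)) = gj (gi (p x))" unfolding gi_def gj_def using ne by (intro GenG_comm) auto
      ultimately show ?thesis by simp
    qed
  qed
qed

lemma X_inv:
  assumes t: "is_tree n p" and i: "1 \<le> i" "Suc i \<le> n" and j: "1 \<le> j" "Suc j \<le> n"
    and ne: "i \<noteq> j" "i \<noteq> Suc j" "Suc i \<noteq> j" "Suc i \<noteq> Suc j"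
  shows "(if sigma j p (Suc i) = 0 then red_weight n (sigma j p) i else 0) = (if p (Suc i) = 0 then red_weight n p i else 0)"
proof -
  define gj where "gj = GenG 0 j (Suc j) (p j) (p (Suc j))"
  have igj: "inj gj" unfolding gj_def by (rule GenG_injf)
  have fj: "gj 0 = 0" "gj i = i" "gj (Suc i) = Suc i" unfolding gj_def using ne j by (simp_all add: GenG_fix)
  have sj: "sigma j p i = gj (p i)" "sigma j p (Suc i) = gj (p (Suc i))" unfolding gj_def using ne by simp_all
  have c1: "sigma j p (Suc i) = 0 \<longleftrightarrow> p (Suc i) = 0" using sj(2) fj(1) igj by (metis injD)
  have c2: "sigma j p i = Suc i \<longleftrightarrow> p i = Suc i" using sj(1) fj(3) igj by (metis injD)
  have sz: "subtree_size n (sigma j p) i = subtree_size n p i" using size_sig[OF t j, of i] ne by simp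
  have tj: "is_tree n (sigma j p)" using sigma_tree[OF t j] .
  show ?thesis using termB[OF tj i] termB[OF t i] c1 c2 sz by simp
qed

lemma comm_aug:
  assumes t: "is_tree n p" and e: "e < n" and i: "1 \<le> i" and ij: "Suc i < j" and j: "Suc j \<le> n"
  shows "sigma_aug n i (sigma_aug n j (p, e)) = sigma_aug n j (sigma_aug n i (p, e))"
proof -
  have n0: "0 < n" using e by simp
  have ib: "1 \<le> i" "Suc i \<le> n" and jb: "1 \<le> j" "Suc j \<le> n" using i ij j by auto
  have ne: "i \<noteq> j" "i \<noteq> Suc j" "Suc i \<noteq> j" "Suc i \<noteq> Suc j" using ij by auto
  have X1: "(if sigma j p (Suc i) = 0 then red_weight n (sigma j p) i else 0) = (if p (Suc i) = 0 then red_weight n p i else 0)"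
    by (rule X_inv[OF t ib jb ne])
  have X2: "(if sigma i p (Suc j) = 0 then red_weight n (sigma i p) j else 0) = (if p (Suc j) = 0 then red_weight n p j else 0)"
    by (rule X_inv[OF t jb ib]) (use ne in auto)
  have L: "sigma_aug n i (sigma_aug n j (p, e)) = (sigma i (sigma j p),
      (e + (if p (Suc j) = 0 then red_weight n p j else 0) + (if sigma j p (Suc i) = 0 then red_weight n (sigma j p) i else 0)) mod n)"
    unfolding sa_eq by (simp only: mod_step[OF e] mod_step2[OF n0])
  have R: "sigma_aug n j (sigma_aug n i (p, e)) = (sigma j (sigma i p),
      (e + (if p (Suc i) = 0 then red_weight n p i else 0) + (if sigma i p (Suc j) = 0 then red_weight n (sigma i p) j else 0)) mod n)"
    unfolding sa_eq by (simp only: mod_step[OF e] mod_step2[OF n0])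
  show ?thesis unfolding L R X1 X2 sig_comm[OF i ij] by (simp add: add.commute add.left_commute)
qed

lemma mod_cancel_nat:
  assumes "(e::nat) < n" "e' < n" "(e + w) mod n = (e' + w) mod n"
  shows "e = e'"
proof -
  have "int ((e + w) mod n) = int ((e' + w) mod n)" using assms(3) by simp
  then have h: "(int e + int w) mod int n = (int e' + int w) mod int n" by (simp add: zmod_int)
  have "int e mod int n = ((int e + int w) mod int n - int w) mod int n"
    by (simp add: mod_diff_left_eq)
  also have "\<dots> = ((int e' + int w) mod int n - int w) mod int n" using h by simp
  also have "\<dots> = int e' mod int n" by (simp add: mod_diff_left_eq)
  finally have "int e mod int n = int e' mod int n" .
  then show ?thesis using assms(1,2) by simp
qed

lemma finite_trees: "finite (trees n)"
proof (rule inj_on_finite[where f="\<lambda>p. map p [1..<Suc n]"])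
  show "inj_on (\<lambda>p. map p [1..<Suc n]) (trees n)"
  proof (rule inj_onI)
    fix p q assume p: "p \<in> trees n" and q: "q \<in> trees n" and e: "map p [1..<Suc n] = map q [1..<Suc n]"
    show "p = q"
    proof
      fix v
      show "p v = q v"
      proof (cases "v \<in> {1..n}")
        case True
        then have "v \<in> set [1..<Suc n]" by auto
        then show ?thesis using e by (metis map_eq_conv)
      next
        case False
        have gp: "good n p" using p unfolding trees_def tree_iff by blast
        have gq: "good n q" using q unfolding trees_def tree_iff by blast
        show ?thesis using good_out[OF gp False] good_out[OF gq False] by simp
      qed
    qed
  qed
  show "(\<lambda>p. map p [1..<Suc n]) ` trees n \<subseteq> {xs. set xs \<subseteq> {..n} \<and> length xs = n}"
  proof
    fix xs assume "xs \<in> (\<lambda>p. map p [1..<Suc n]) ` trees n"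
    then obtain p where p: "p \<in> trees n" and xs: "xs = map p [1..<Suc n]" by blast
    have gp: "good n p" using p unfolding trees_def tree_iff by blast
    have "set xs \<subseteq> {..n}" using xs good_le[OF gp] by auto
    then show "xs \<in> {xs. set xs \<subseteq> {..n} \<and> length xs = n}" using xs by simp
  qed
  show "finite {xs. set xs \<subseteq> {..n::nat} \<and> length xs = n}" by (rule finite_lists_length_eq) simp
qed

lemma aug_bij:
  assumes i: "1 \<le> i" "Suc i \<le> n"
  shows "bij_betw (sigma_aug n i) (aug_trees n) (aug_trees n)"
proof -
  have n0: "0 < n" using i by simp
  have into: "sigma_aug n i ` aug_trees n \<subseteq> aug_trees n"
  proof
    fix z assume "z \<in> sigma_aug n i ` aug_trees n"
    then obtain p e where pe: "(p, e) \<in> aug_trees n" and z: "z = sigma_aug n i (p, e)" by auto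
    have t: "is_tree n p" and e: "e < n" using pe by (auto simp: aug_trees_def trees_def)
    have "is_tree n (sigma i p)" using sigma_tree[OF t i] .
    moreover have "(if p (Suc i) = 0 then (e + red_weight n p i) mod n else e) < n" using e n0 by simp
    ultimately show "z \<in> aug_trees n" unfolding z sa_eq by (simp add: aug_trees_def trees_def)
  qed
  have inj: "inj_on (sigma_aug n i) (aug_trees n)"
  proof (rule inj_onI)
    fix x y assume x: "x \<in> aug_trees n" and y: "y \<in> aug_trees n" and e: "sigma_aug n i x = sigma_aug n i y"
    obtain p e1 where xx: "x = (p, e1)" by (cases x)
    obtain q e2 where yy: "y = (q, e2)" by (cases y)
    have tp: "is_tree n p" and e1: "e1 < n" using x xx by (auto simp: aug_trees_def trees_def)
    have tq: "is_tree n q" and e2: "e2 < n" using y yy by (auto simp: aug_trees_def trees_def)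
    have "sigma i p = sigma i q" using e xx yy by (simp add: sa_eq)
    then have pq: "p = q" using sigma_inj[OF tp tq i] by simp
    have "(if p (Suc i) = 0 then (e1 + red_weight n p i) mod n else e1) = (if p (Suc i) = 0 then (e2 + red_weight n p i) mod n else e2)"
    proof -
      have "snd (sigma_aug n i (p, e1)) = snd (sigma_aug n i (p, e2))" using e xx yy pq by simp
      then show ?thesis by (simp only: sa_eq snd_conv)
    qed
    then have "e1 = e2" using mod_cancel_nat[OF e1 e2] by (cases "p (Suc i) = 0") simp_all
    then show "x = y" using xx yy pq by simp
  qed
  have fin: "finite (aug_trees n)" unfolding aug_trees_def using finite_trees by simp
  show ?thesis unfolding bij_betw_def using inj endo_inj_surj[OF fin into inj] by simp
qed

theorem theorem1p12:
  fixes n :: nat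
  assumes "n \<ge> 2"
  shows "(\<forall>i\<in>{1..n-1}. bij_betw (sigma_aug n i) (aug_trees n) (aug_trees n))
    \<and> (\<forall>i\<in>{1..n-1}. \<forall>j\<in>{1..n-1}. (i + 2 \<le> j \<or> j + 2 \<le> i) \<longrightarrow>
          (\<forall>x\<in>aug_trees n. sigma_aug n i (sigma_aug n j x) = sigma_aug n j (sigma_aug n i x)))
    \<and> (\<forall>i\<in>{1..n-2}. \<forall>x\<in>aug_trees n.
          sigma_aug n i (sigma_aug n (Suc i) (sigma_aug n i x)) =
          sigma_aug n (Suc i) (sigma_aug n i (sigma_aug n (Suc i) x)))"
proof (intro conjI ballI impI)
  fix i assume i: "i \<in> {1..n-1}"
  then have "1 \<le> i" "Suc i \<le> n" by auto
  then show "bij_betw (sigma_aug n i) (aug_trees n) (aug_trees n)" by (rule aug_bij)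
next
  fix i j x assume i: "i \<in> {1..n-1}" and j: "j \<in> {1..n-1}" and ij: "i + 2 \<le> j \<or> j + 2 \<le> i"
    and x: "x \<in> aug_trees n"
  obtain p e where xx: "x = (p, e)" by (cases x)
  have t: "is_tree n p" and e: "e < n" using x xx by (auto simp: aug_trees_def trees_def)
  have ib: "1 \<le> i" "Suc i \<le> n" and jb: "1 \<le> j" "Suc j \<le> n" using i j by auto
  show "sigma_aug n i (sigma_aug n j x) = sigma_aug n j (sigma_aug n i x)"
  proof (cases "i + 2 \<le> j")
    case True
    then have "Suc i < j" by simp
    then show ?thesis unfolding xx using comm_aug[OF t e ib(1) _ jb(2)] by simp
  next
    case False
    then have "Suc j < i" using ij by simp
    then show ?thesis unfolding xx using comm_aug[OF t e jb(1) _ ib(2)] by simp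
  qed
next
  fix i x assume i: "i \<in> {1..n-2}" and x: "x \<in> aug_trees n"
  obtain p e where xx: "x = (p, e)" by (cases x)
  have t: "is_tree n p" and e: "e < n" using x xx by (auto simp: aug_trees_def trees_def)
  have ib: "1 \<le> i" "Suc (Suc i) \<le> n" using i assms by auto
  show "sigma_aug n i (sigma_aug n (Suc i) (sigma_aug n i x)) =
          sigma_aug n (Suc i) (sigma_aug n i (sigma_aug n (Suc i) x))"
    unfolding xx by (rule braid_aug[OF t e ib])
qed

end
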